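(* Let $\mathcal E$ be an exchangeability system for a noncommutative probability space $(\mathcal A,\phi)$ whose family of copies $(\mathcal A_k)_{k\in\mathbb N}$ satisfies pyramidal independence. Let $X_1,\dots,X_n\in\mathcal A$ and let $\pi\in\Pi_n$ have connected components $\pi',\pi'',\dots$. Then $$\phi_\pi(X_1,\dots,X_n)=\phi_{\pi'}(X_1,\dots,X_n)\,\phi_{\pi''}(X_1,\dots,X_n)\cdots$$ and $$K_\pi(X_1,\dots,X_n)=K_{\pi'}(X_1,\dots,X_n)\,K_{\pi''}(X_1,\dots,X_n)\cdots.$$
   Context: A noncommutative probability space is a pair $(\mathcal A,\phi)$ of a complex unital algebra $\mathcal A$ and a unital linear functional $\phi$. An exchangeability system $\mathcal E$ for $(\mathcal A,\phi)$ consists of a noncommutative probability space $(\mathcal U,\tilde\phi)$ and a family $(\iota_k)_{k\in\mathbb N}$ of embeddings (injective unital algebra homomorphisms) $\iota_k:\mathcal A\to\mathcal A_k\subseteq\mathcal U$ with $\tilde\phi\circ\iota_k=\phi$; write $X^{(k)}=\iota_k(X)$. It is required that for all $X_1,\dots,X_n\in\mathcal A$, indices $i_1,\dots,i_n\in\mathbb N$ and bijections $\sigma$ of $\mathbb N$, $\tilde\phi(X_1^{(i_1)}\cdots X_n^{(i_n)})=\tilde\phi(X_1^{(\sigma(i_1))}\cdots X_n^{(\sigma(i_n))})$; this value depends only on the kernel of $j\mapsto i_j$ and for a partition $\sigma$ of $[n]$ is denoted $\phi_\sigma(X_1,\dots,X_n)$. If $\sigma$ is a partition of a subset $S\subseteq[n]$,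 $\phi_\sigma(X_1,\dots,X_n)$ means $\phi_\sigma(X_j:j\in S)$ with the $X_j$ in increasing order of $j$ (and $\sigma$ transported to a partition of $[|S|]$); similarly for $K_\sigma$. $\Pi_n$ is the set-partition lattice of $[n]$ under refinement with Möbius function $\mu$; $K_\pi=\sum_{\sigma\le\pi}\phi_\sigma\mu(\sigma,\pi)$. Two distinct blocks $B,B'$ of $\pi$ cross if there are $a<b<c<d$ with $a,c$ in one of them and $b,d$ in the other; the connected components of $\pi$ are the subpartitions formed by the equivalence classes of blocks under the equivalence relation generated by crossing. The family $(\mathcal A_k)$ satisfies pyramidal independence if for all disjoint $I,J\subseteq\mathbb N$, with $\mathcal A_I,\mathcal A_J$ the subalgebras generated by $(\mathcal A_k)_{k\in I}$, $(\mathcal A_k)_{k\in J}$, one has $\tilde\phi(XYX')=\tilde\phi(XX')\tilde\phi(Y)$ whenever $X,X'\in\mathcal A_I$, $Y\in\mathcal A_J$, and also with the roles of $I$ and $J$ exchanged. *)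

theory Defs
  imports Complex_Main "HOL-Library.Disjoint_Sets"
begin

definition complex_algebra :: "(complex \<Rightarrow> 'a::ring_1 \<Rightarrow> 'a) \<Rightarrow> bool" where
  "complex_algebra sc \<longleftrightarrow> module sc \<and>
     (\<forall>c x y. sc c (x * y) = sc c x * y \<and> sc c (x * y) = x * sc c y)"

definition nc_prob_space :: "(complex \<Rightarrow> 'a::ring_1 \<Rightarrow> 'a) \<Rightarrow> ('a \<Rightarrow> complex) \<Rightarrow> bool" where
  "nc_prob_space sc phi \<longleftrightarrow> complex_algebra sc \<and> phi 1 = 1 \<and>
     (\<forall>x y. phi (x + y) = phi x + phi y) \<and> (\<forall>c x. phi (sc c x) = c * phi x)"

definition unital_alg_embedding ::
  "(complex \<Rightarrow> 'a::ring_1 \<Rightarrow> 'a) \<Rightarrow> (complex \<Rightarrow> 'u::ring_1 \<Rightarrow> 'u) \<Rightarrow> ('a \<Rightarrow> 'u) \<Rightarrow> bool" where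
  "unital_alg_embedding scA scU f \<longleftrightarrow> inj f \<and> f 1 = 1 \<and>
     (\<forall>x y. f (x + y) = f x + f y) \<and> (\<forall>x y. f (x * y) = f x * f y) \<and>
     (\<forall>c x. f (scA c x) = scU c (f x))"

definition mixed_word :: "(nat \<Rightarrow> 'a \<Rightarrow> 'u::ring_1) \<Rightarrow> nat list \<Rightarrow> 'a list \<Rightarrow> 'u" where
  "mixed_word iota idx Xs = prod_list (map2 (\<lambda>i x. iota i x) idx Xs)"

definition exchangeability_system ::
  "(complex \<Rightarrow> 'a::ring_1 \<Rightarrow> 'a) \<Rightarrow> ('a \<Rightarrow> complex) \<Rightarrow>
   (complex \<Rightarrow> 'u::ring_1 \<Rightarrow> 'u) \<Rightarrow> ('u \<Rightarrow> complex) \<Rightarrow> (nat \<Rightarrow> 'a \<Rightarrow> 'u) \<Rightarrow> bool" where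
  "exchangeability_system scA phi scU phiU iota \<longleftrightarrow>
     nc_prob_space scA phi \<and> nc_prob_space scU phiU \<and>
     (\<forall>k. unital_alg_embedding scA scU (iota k) \<and> (\<forall>x. phiU (iota k x) = phi x)) \<and>
     (\<forall>Xs idx (\<sigma>::nat \<Rightarrow> nat). length idx = length Xs \<longrightarrow> bij \<sigma> \<longrightarrow>
        phiU (mixed_word iota idx Xs) = phiU (mixed_word iota (map \<sigma> idx) Xs))"

inductive_set gen_subalg :: "(complex \<Rightarrow> 'u::ring_1 \<Rightarrow> 'u) \<Rightarrow> 'u set \<Rightarrow> 'u set"
  for sc :: "complex \<Rightarrow> 'u \<Rightarrow> 'u" and G :: "'u set" where
  one: "1 \<in> gen_subalg sc G"
| gen: "x \<in> G \<Longrightarrow> x \<in> gen_subalg sc G"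
| add: "x \<in> gen_subalg sc G \<Longrightarrow> y \<in> gen_subalg sc G \<Longrightarrow> x + y \<in> gen_subalg sc G"
| mult: "x \<in> gen_subalg sc G \<Longrightarrow> y \<in> gen_subalg sc G \<Longrightarrow> x * y \<in> gen_subalg sc G"
| scale: "x \<in> gen_subalg sc G \<Longrightarrow> sc c x \<in> gen_subalg sc G"

definition alg_I :: "(complex \<Rightarrow> 'u::ring_1 \<Rightarrow> 'u) \<Rightarrow> (nat \<Rightarrow> 'a \<Rightarrow> 'u) \<Rightarrow> nat set \<Rightarrow> 'u set" where
  "alg_I scU iota I = gen_subalg scU (\<Union>k\<in>I. range (iota k))"

definition pyramidal_independence ::
  "(complex \<Rightarrow> 'u::ring_1 \<Rightarrow> 'u) \<Rightarrow> ('u \<Rightarrow> complex) \<Rightarrow> (nat \<Rightarrow> 'a \<Rightarrow> 'u) \<Rightarrow> bool" where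
  "pyramidal_independence scU phiU iota \<longleftrightarrow>
     (\<forall>I J. I \<inter> J = {} \<longrightarrow>
        (\<forall>X\<in>alg_I scU iota I. \<forall>X'\<in>alg_I scU iota I. \<forall>Y\<in>alg_I scU iota J.
           phiU (X * Y * X') = phiU (X * X') * phiU Y) \<and>
        (\<forall>X\<in>alg_I scU iota J. \<forall>X'\<in>alg_I scU iota J. \<forall>Y\<in>alg_I scU iota I.
           phiU (X * Y * X') = phiU (X * X') * phiU Y))"

text \<open>Partitions of [n], realised on the index set {0..<n}.\<close>
definition set_partitions :: "nat \<Rightarrow> nat set set set" where
  "set_partitions n = {P. partition_on {0..<n} P}"

definition refines :: "'b set set \<Rightarrow> 'b set set \<Rightarrow> bool" where
  "refines \<sigma> \<pi> \<longleftrightarrow> (\<forall>B\<in>\<sigma>. \<exists>C\<in>\<pi>. B \<subseteq> C)"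

text \<open>The fuel k bounds the recursion depth; card P suffices.\<close>
fun mobius_fuel :: "nat \<Rightarrow> 'c set \<Rightarrow> ('c \<Rightarrow> 'c \<Rightarrow> bool) \<Rightarrow> 'c \<Rightarrow> 'c \<Rightarrow> int" where
  "mobius_fuel 0 P le x y = (if x = y then 1 else 0)"
| "mobius_fuel (Suc k) P le x y =
     (if x = y then 1
      else if le x y then - (\<Sum>z\<in>{z\<in>P. le x z \<and> le z y \<and> z \<noteq> y}. mobius_fuel k P le x z)
      else 0)"

definition mobius :: "'c set \<Rightarrow> ('c \<Rightarrow> 'c \<Rightarrow> bool) \<Rightarrow> 'c \<Rightarrow> 'c \<Rightarrow> int" where
  "mobius P le x y = mobius_fuel (card P) P le x y"

definition mu_Pi :: "nat \<Rightarrow> nat set set \<Rightarrow> nat set set \<Rightarrow> int" where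
  "mu_Pi n = mobius (set_partitions n) refines"

text \<open>The block of a partition containing j, and a labelling of positions whose kernel is sigma
  (each position is labelled by the least element of its block).\<close>
definition block_of :: "nat set set \<Rightarrow> nat \<Rightarrow> nat set" where
  "block_of \<sigma> j = (THE B. B \<in> \<sigma> \<and> j \<in> B)"

definition phi_part :: "('u::ring_1 \<Rightarrow> complex) \<Rightarrow> (nat \<Rightarrow> 'a \<Rightarrow> 'u) \<Rightarrow> nat set set \<Rightarrow> 'a list \<Rightarrow> complex" where
  "phi_part phiU iota \<sigma> Xs =
     phiU (mixed_word iota (map (\<lambda>j. Min (block_of \<sigma> j)) [0..<length Xs]) Xs)"

definition K_part :: "('u::ring_1 \<Rightarrow> complex) \<Rightarrow> (nat \<Rightarrow> 'a \<Rightarrow> 'u) \<Rightarrow> nat set set \<Rightarrow> 'a list \<Rightarrow> complex" where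
  "K_part phiU iota \<pi> Xs =
     (\<Sum>\<sigma>\<in>{\<sigma>\<in>set_partitions (length Xs). refines \<sigma> \<pi>}.
        phi_part phiU iota \<sigma> Xs * of_int (mu_Pi (length Xs) \<sigma> \<pi>))"

text \<open>For a partition c of a subset S of the positions, restrict the list to the positions in S
  (in increasing order) and transport c to a partition of {0..<card S}.\<close>
definition sub_list :: "nat set set \<Rightarrow> 'a list \<Rightarrow> 'a list" where
  "sub_list c Xs = map (nth Xs) (sorted_list_of_set (\<Union>c))"

definition transport_part :: "nat set set \<Rightarrow> nat set set" where
  "transport_part c = (let s = sorted_list_of_set (\<Union>c) in
     (\<lambda>B. {i. i < length s \<and> s ! i \<in> B}) ` c)"

definition phi_sub :: "('u::ring_1 \<Rightarrow> complex) \<Rightarrow> (nat \<Rightarrow> 'a \<Rightarrow> 'u) \<Rightarrow> nat set set \<Rightarrow> 'a list \<Rightarrow> complex" where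
  "phi_sub phiU iota c Xs = phi_part phiU iota (transport_part c) (sub_list c Xs)"

definition K_sub :: "('u::ring_1 \<Rightarrow> complex) \<Rightarrow> (nat \<Rightarrow> 'a \<Rightarrow> 'u) \<Rightarrow> nat set set \<Rightarrow> 'a list \<Rightarrow> complex" where
  "K_sub phiU iota c Xs = K_part phiU iota (transport_part c) (sub_list c Xs)"

definition crosses :: "nat set \<Rightarrow> nat set \<Rightarrow> bool" where
  "crosses B B' \<longleftrightarrow> B \<noteq> B' \<and>
     (\<exists>a b c d. a < b \<and> b < c \<and> c < d \<and>
        ((a \<in> B \<and> c \<in> B \<and> b \<in> B' \<and> d \<in> B') \<or> (a \<in> B' \<and> c \<in> B' \<and> b \<in> B \<and> d \<in> B)))"

definition cross_rel :: "nat set set \<Rightarrow> (nat set \<times> nat set) set" where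
  "cross_rel \<pi> = {(B, B'). B \<in> \<pi> \<and> B' \<in> \<pi> \<and> crosses B B'}"

definition components :: "nat set set \<Rightarrow> nat set set set" where
  "components \<pi> = (\<lambda>B. {B'\<in>\<pi>. (B, B') \<in> (cross_rel \<pi> \<union> (cross_rel \<pi>)\<inverse>)\<^sup>*}) ` \<pi>"

end

theory Submission
  imports Defs "HOL-Library.Infinite_Set" "HOL-Library.FuncSet"
begin

definition pl :: "nat set set \<Rightarrow> bool" where
  "pl \<sigma> \<longleftrightarrow> finite \<sigma> \<and> (\<forall>B\<in>\<sigma>. finite B \<and> B \<noteq> {}) \<and> disjoint \<sigma>"

lemma block_of_eq: "disjoint \<sigma> \<Longrightarrow> B \<in> \<sigma> \<Longrightarrow> j \<in> B \<Longrightarrow> block_of \<sigma> j = B"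
  unfolding block_of_def
  by (rule the_equality) (auto dest: disjointD)

lemma sorted_Un_less:
  fixes A B :: "nat set"
  assumes "finite A" "finite B" "\<forall>a\<in>A. \<forall>b\<in>B. a < b"
  shows "sorted_list_of_set (A \<union> B) = sorted_list_of_set A @ sorted_list_of_set B"
proof -
  have "sorted_wrt (<) (sorted_list_of_set A @ sorted_list_of_set B)"
    using assms by (auto simp: sorted_wrt_append)
  moreover have "distinct (sorted_list_of_set A @ sorted_list_of_set B)"
    using assms by auto
  ultimately show ?thesis using assms
    by (metis finite_Un set_append set_sorted_list_of_set sorted_list_of_set.idem_if_sorted_distinct strict_sorted_iff)
qed

lemma prod_list_in_gen: "(\<forall>x\<in>set xs. x \<in> gen_subalg sc G) \<Longrightarrow> prod_list xs \<in> gen_subalg sc G"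
  by (induction xs) (auto intro: gen_subalg.intros)

lemma iota_in_alg: "k \<in> I \<Longrightarrow> iota k x \<in> alg_I sc iota I"
  unfolding alg_I_def by (rule gen_subalg.gen) blast

lemma map_in_alg: "(\<forall>j\<in>set xs. g j \<in> I) \<Longrightarrow> prod_list (map (\<lambda>j. iota (g j) (X j)) xs) \<in> alg_I sc iota I"
proof (induction xs)
  case Nil then show ?case unfolding alg_I_def by (auto intro: gen_subalg.one)
next
  case (Cons a xs)
  then show ?case using iota_in_alg[of "g a" I iota "X a" sc] unfolding alg_I_def
    by (auto intro: gen_subalg.mult)
qed

locale pyr =
  fixes scA :: "complex \<Rightarrow> 'a::ring_1 \<Rightarrow> 'a" and phi :: "'a \<Rightarrow> complex"
    and scU :: "complex \<Rightarrow> 'u::ring_1 \<Rightarrow> 'u" and phiU :: "'u \<Rightarrow> complex"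
    and iota :: "nat \<Rightarrow> 'a \<Rightarrow> 'u"
  assumes ex: "exchangeability_system scA phi scU phiU iota"
    and py: "pyramidal_independence scU phiU iota"
begin

definition Phi :: "nat set set \<Rightarrow> (nat \<Rightarrow> 'a) \<Rightarrow> complex" where
  "Phi \<sigma> X = phiU (prod_list (map (\<lambda>j. iota (Min (block_of \<sigma> j)) (X j)) (sorted_list_of_set (\<Union>\<sigma>))))"

lemma phiU_one: "phiU 1 = 1"
  using ex unfolding exchangeability_system_def nc_prob_space_def by auto

lemma Phi_empty: "Phi {} X = 1"
  by (simp add: Phi_def phiU_one)

lemma py_mid:
  assumes "I \<inter> J = {}" "A \<in> alg_I scU iota I" "A' \<in> alg_I scU iota I" "Y \<in> alg_I scU iota J"
  shows "phiU (A * Y * A') = phiU (A * A') * phiU Y"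
  using py assms unfolding pyramidal_independence_def by blast

lemma split:
  assumes pl: "pl \<sigma>" and T: "T \<subseteq> \<sigma>" "T \<noteq> {}"
    and conv: "\<forall>a\<in>\<Union>T. \<forall>b\<in>\<Union>T. \<forall>j\<in>\<Union>\<sigma>. a < j \<and> j < b \<longrightarrow> j \<in> \<Union>T"
  shows "Phi \<sigma> X = Phi T X * Phi (\<sigma> - T) X"
proof -
  define S where "S = \<Union>\<sigma>"
  define ST where "ST = \<Union>T"
  have finS: "finite S" using pl unfolding pl_def S_def by auto
  have STS: "ST \<subseteq> S" using T unfolding S_def ST_def by auto
  have finST: "finite ST" using STS finS finite_subset by blast
  have STne: "ST \<noteq> {}" using T pl unfolding ST_def pl_def by blast
  define m where "m = Min ST"
  define M where "M = Max ST"
  have mST: "m \<in> ST" and MST: "M \<in> ST" using finST STne unfolding m_def M_def by auto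
  have mle: "\<And>x. x \<in> ST \<Longrightarrow> m \<le> x \<and> x \<le> M" using finST unfolding m_def M_def by auto
  define L where "L = {j\<in>S. j < m}"
  define R where "R = {j\<in>S. M < j}"
  have disj: "disjoint \<sigma>" using pl unfolding pl_def by auto
  have rest: "\<Union>(\<sigma> - T) = S - ST"
  proof
    show "\<Union>(\<sigma> - T) \<subseteq> S - ST"
      using T disj unfolding S_def ST_def by (auto dest: disjointD)
  next
    show "S - ST \<subseteq> \<Union>(\<sigma> - T)" unfolding S_def ST_def by auto
  qed
  have SLR: "S - ST = L \<union> R"
  proof
    show "S - ST \<subseteq> L \<union> R"
    proof
      fix j assume j: "j \<in> S - ST"
      have "\<not> (m < j \<and> j < M)" using conv j mST MST unfolding S_def ST_def by blast
      moreover have "j \<noteq> m" "j \<noteq> M" using j mST MST by auto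
      ultimately show "j \<in> L \<union> R" using j unfolding L_def R_def by auto
    qed
  next
    show "L \<union> R \<subseteq> S - ST" unfolding L_def R_def using mle by fastforce
  qed
  have SS: "S = L \<union> (ST \<union> R)" using SLR STS unfolding L_def R_def by auto
  have finL: "finite L" "finite R" using finS unfolding L_def R_def by auto
  have lt1: "\<forall>a\<in>L. \<forall>b\<in>ST \<union> R. a < b"
  proof (intro ballI)
    fix a b assume a: "a \<in> L" and b: "b \<in> ST \<union> R"
    have "a < m" using a unfolding L_def by auto
    moreover have "m \<le> b" using b mle mST unfolding R_def by fastforce
    ultimately show "a < b" by simp
  qed
  have lt2: "\<forall>a\<in>ST. \<forall>b\<in>R. a < b" using mle unfolding R_def by fastforce
  have lt3: "\<forall>a\<in>L. \<forall>b\<in>R. a < b" using mle mST unfolding L_def R_def by fastforce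
  have sortS: "sorted_list_of_set S = sorted_list_of_set L @ sorted_list_of_set ST @ sorted_list_of_set R"
    unfolding SS using sorted_Un_less[OF finL(1) _ lt1] sorted_Un_less[OF finST finL(2) lt2] finST finL by simp
  have sortLR: "sorted_list_of_set (S - ST) = sorted_list_of_set L @ sorted_list_of_set R"
    unfolding SLR using sorted_Un_less[OF finL lt3] .
  define f where "f = (\<lambda>B j. iota (Min (block_of B j)) (X j))"
  have bT: "\<And>j. j \<in> ST \<Longrightarrow> block_of \<sigma> j = block_of T j"
  proof -
    fix j assume "j \<in> ST"
    then obtain B where B: "B \<in> T" "j \<in> B" unfolding ST_def by auto
    have dT: "disjoint T" using pairwise_subset[OF disj] T by blast
    show "block_of \<sigma> j = block_of T j" using block_of_eq[OF disj, of B j] block_of_eq[OF dT, of B j] B T by auto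
  qed
  have bR: "\<And>j. j \<in> S - ST \<Longrightarrow> block_of \<sigma> j = block_of (\<sigma> - T) j"
  proof -
    fix j assume "j \<in> S - ST"
    then obtain B where B: "B \<in> \<sigma> - T" "j \<in> B" using rest by auto
    have dT: "disjoint (\<sigma> - T)" using pairwise_subset[OF disj] by blast
    show "block_of \<sigma> j = block_of (\<sigma> - T) j" using block_of_eq[OF disj, of B j] block_of_eq[OF dT, of B j] B by auto
  qed
  define PL where "PL = prod_list (map (f (\<sigma> - T)) (sorted_list_of_set L))"
  define PR where "PR = prod_list (map (f (\<sigma> - T)) (sorted_list_of_set R))"
  define PM where "PM = prod_list (map (f T) (sorted_list_of_set ST))"
  have eq1: "prod_list (map (f \<sigma>) (sorted_list_of_set S)) = PL * PM * PR"
  proof -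
    have m1: "map (f \<sigma>) (sorted_list_of_set L) = map (f (\<sigma> - T)) (sorted_list_of_set L)"
      using bR finL SLR unfolding f_def by (auto intro!: map_cong)
    have m2: "map (f \<sigma>) (sorted_list_of_set R) = map (f (\<sigma> - T)) (sorted_list_of_set R)"
      using bR finL SLR unfolding f_def by (auto intro!: map_cong)
    have m3: "map (f \<sigma>) (sorted_list_of_set ST) = map (f T) (sorted_list_of_set ST)"
      using bT finST unfolding f_def by (auto intro!: map_cong)
    show ?thesis unfolding sortS map_append prod_list.append m1 m2 m3 PL_def PR_def PM_def by (simp add: mult.assoc)
  qed
  have eq2: "prod_list (map (f (\<sigma> - T)) (sorted_list_of_set (S - ST))) = PL * PR"
    unfolding sortLR PL_def PR_def by simp
  define I where "I = Min ` (\<sigma> - T)"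
  define J where "J = Min ` T"
  have IJ: "I \<inter> J = {}"
  proof (rule ccontr)
    assume "I \<inter> J \<noteq> {}"
    then obtain B B' where B: "B \<in> \<sigma> - T" "B' \<in> T" "Min B = Min B'" unfolding I_def J_def by auto
    have fB: "finite B" "B \<noteq> {}" "finite B'" "B' \<noteq> {}" using B T pl unfolding pl_def by auto
    have "Min B \<in> B" "Min B' \<in> B'" using Min_in fB by auto
    then have "B \<inter> B' \<noteq> {}" using B by auto
    then show False using B T disj by (auto dest: disjointD)
  qed
  have blkR: "\<And>j. j \<in> S - ST \<Longrightarrow> block_of (\<sigma> - T) j \<in> \<sigma> - T"
  proof -
    fix j assume "j \<in> S - ST"
    then obtain B where B: "B \<in> \<sigma> - T" "j \<in> B" using rest by auto
    have dT: "disjoint (\<sigma> - T)" using pairwise_subset[OF disj] by blast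
    show "block_of (\<sigma> - T) j \<in> \<sigma> - T" using block_of_eq[OF dT, of B j] B by auto
  qed
  have blkT: "\<And>j. j \<in> ST \<Longrightarrow> block_of T j \<in> T"
  proof -
    fix j assume "j \<in> ST"
    then obtain B where B: "B \<in> T" "j \<in> B" unfolding ST_def by auto
    have dT: "disjoint T" using pairwise_subset[OF disj] T by blast
    show "block_of T j \<in> T" using block_of_eq[OF dT, of B j] B by auto
  qed
  have aL: "PL \<in> alg_I scU iota I" unfolding PL_def f_def
    by (rule map_in_alg) (use blkR finL SLR in \<open>auto simp: I_def\<close>)
  have aR: "PR \<in> alg_I scU iota I" unfolding PR_def f_def
    by (rule map_in_alg) (use blkR finL SLR in \<open>auto simp: I_def\<close>)
  have aM: "PM \<in> alg_I scU iota J" unfolding PM_def f_def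
    by (rule map_in_alg) (use blkT finST in \<open>auto simp: J_def\<close>)
  have "Phi \<sigma> X = phiU (PL * PM * PR)" using eq1 unfolding Phi_def f_def S_def by simp
  also have "\<dots> = phiU (PL * PR) * phiU PM" by (rule py_mid[OF IJ aL aR aM])
  also have "phiU (PL * PR) = Phi (\<sigma> - T) X" using eq2 rest unfolding Phi_def f_def by simp
  also have "phiU PM = Phi T X" unfolding Phi_def PM_def f_def ST_def by simp
  finally show ?thesis by simp
qed

end

definition cls :: "nat set set \<Rightarrow> nat set \<Rightarrow> nat set set" where
  "cls \<sigma> B0 = {B'\<in>\<sigma>. (B0, B') \<in> (cross_rel \<sigma>)\<^sup>*}"

lemma crosses_sym: "crosses B B' = crosses B' B"
  unfolding crosses_def by blast

lemma cross_rel_sym: "sym (cross_rel \<sigma>)"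
  unfolding sym_def cross_rel_def using crosses_sym by auto

lemma cross_rel_Un: "cross_rel \<sigma> \<union> (cross_rel \<sigma>)\<inverse> = cross_rel \<sigma>"
  using cross_rel_sym by (auto simp: sym_def)

lemma components_cls: "components \<sigma> = cls \<sigma> ` \<sigma>"
  unfolding components_def cls_def cross_rel_Un by simp

lemma path_induct:
  assumes "(B0, B) \<in> (cross_rel \<sigma>)\<^sup>*" "P B0"
    and "\<And>D D'. P D \<Longrightarrow> D \<in> \<sigma> \<Longrightarrow> D' \<in> \<sigma> \<Longrightarrow> crosses D D' \<Longrightarrow> P D'"
  shows "P B"
  using assms(1,2)
proof (induction rule: rtrancl_induct)
  case base then show ?case .
next
  case (step y z) then show ?case using assms(3) unfolding cross_rel_def by auto
qed

lemma cls_self: "B \<in> \<sigma> \<Longrightarrow> B \<in> cls \<sigma> B"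
  unfolding cls_def by auto

lemma cls_sub: "cls \<sigma> B \<subseteq> \<sigma>"
  unfolding cls_def by auto

lemma cls_closed: "B \<in> cls \<sigma> B0 \<Longrightarrow> B' \<in> \<sigma> \<Longrightarrow> crosses B B' \<Longrightarrow> B' \<in> cls \<sigma> B0"
  unfolding cls_def cross_rel_def
  by (auto intro: rtrancl_into_rtrancl)

lemma cls_eq: "B \<in> cls \<sigma> B0 \<Longrightarrow> cls \<sigma> B = cls \<sigma> B0"
proof -
  assume B: "B \<in> cls \<sigma> B0"
  then have r: "(B0, B) \<in> (cross_rel \<sigma>)\<^sup>*" unfolding cls_def by auto
  then have r': "(B, B0) \<in> (cross_rel \<sigma>)\<^sup>*" using cross_rel_sym sym_rtrancl by (metis symD)
  show ?thesis unfolding cls_def using r r' by (auto intro: rtrancl_trans)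
qed

lemma cls_disj: "B \<in> cls \<sigma> B1 \<Longrightarrow> B \<in> cls \<sigma> B2 \<Longrightarrow> cls \<sigma> B1 = cls \<sigma> B2"
  using cls_eq by metis

lemma cross_both: "crosses D D' \<Longrightarrow> (\<exists>x\<in>D. \<exists>y\<in>D'. x < y) \<and> (\<exists>x\<in>D. \<exists>y\<in>D'. y < x)"
  unfolding crosses_def by (elim conjE exE disjE) blast+

lemma cross_between: "crosses D D' \<Longrightarrow> \<exists>x\<in>D. \<exists>y\<in>D. \<exists>z\<in>D'. x < z \<and> z < y"
  unfolding crosses_def by (elim conjE exE disjE) blast+

lemma cross_mono: "crosses B B' \<Longrightarrow> B \<subseteq> C \<Longrightarrow> B' \<subseteq> C' \<Longrightarrow> C \<noteq> C' \<Longrightarrow> crosses C C'"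
  unfolding crosses_def by blast

lemma mixed_cross:
  assumes "finite B" "B \<noteq> {}" "B \<inter> D = {}" "d \<in> D" "Min B < d" "d < Max B" "e \<in> D"
    "e < Min B \<or> Max B < e"
  shows "crosses B D"
proof -
  have "Min B \<in> B" "Max B \<in> B" using assms Min_in Max_in by auto
  then have ne: "B \<noteq> D" using assms by auto
  show ?thesis using assms(8)
  proof
    assume "e < Min B"
    then show ?thesis unfolding crosses_def using ne \<open>Min B \<in> B\<close> \<open>Max B \<in> B\<close> assms by blast
  next
    assume "Max B < e"
    then show ?thesis unfolding crosses_def using ne \<open>Min B \<in> B\<close> \<open>Max B \<in> B\<close> assms by blast
  qed
qed

lemma pl_sub: "pl \<sigma> \<Longrightarrow> T \<subseteq> \<sigma> \<Longrightarrow> pl T"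
proof -
  assume a: "pl \<sigma>" "T \<subseteq> \<sigma>"
  have "finite T" using a finite_subset unfolding pl_def by blast
  moreover have "disjoint T" using a pairwise_subset unfolding pl_def by blast
  ultimately show "pl T" using a unfolding pl_def by blast
qed

lemma pl_disj: "pl \<sigma> \<Longrightarrow> B \<in> \<sigma> \<Longrightarrow> B' \<in> \<sigma> \<Longrightarrow> B \<noteq> B' \<Longrightarrow> B \<inter> B' = {}"
  unfolding pl_def by (auto dest: disjointD)

lemma interval_union:
  assumes pl: "pl \<sigma>" and B0: "B0 \<in> \<sigma>" and c: "c = cls \<sigma> B0"
    and a: "a \<in> \<Union>c" and b: "b \<in> \<Union>c" and j: "a < j" "j < b" "j \<notin> \<Union>c"
  shows "\<exists>B\<in>c. Min B < j \<and> j < Max B"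
proof (rule ccontr)
  assume nB: "\<not> (\<exists>B\<in>c. Min B < j \<and> j < Max B)"
  define lo where "lo D = (\<forall>x\<in>D. x < j)" for D :: "nat set"
  define hi where "hi D = (\<forall>x\<in>D. j < x)" for D :: "nat set"
  have side: "lo D \<or> hi D" if D: "D \<in> c" for D
  proof -
    have fD: "finite D" "D \<noteq> {}" using D c cls_sub pl unfolding pl_def by blast+
    have jD: "j \<notin> D" using j(3) D by auto
    have "Max D \<in> D" "Min D \<in> D" using fD by auto
    then have "Max D \<noteq> j" "Min D \<noteq> j" using jD by auto
    show ?thesis
    proof (cases "Max D < j")
      case True then show ?thesis unfolding lo_def using fD by (meson Max_ge le_less_trans)
    next
      case False
      then have "Min D > j" using nB D \<open>Max D \<noteq> j\<close> \<open>Min D \<noteq> j\<close> by auto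
      then show ?thesis unfolding hi_def using fD by (meson Min_le less_le_trans)
    qed
  qed
  have nboth: "\<not> (lo D \<and> hi D)" if "D \<noteq> {}" for D
    using that unfolding lo_def hi_def by fastforce
  have B0c: "B0 \<in> c" using c B0 cls_self by auto
  have keep: "D \<in> c \<and> lo D = lo B0" if "D \<in> c" for D
  proof -
    have "(B0, D) \<in> (cross_rel \<sigma>)\<^sup>*" using that c unfolding cls_def by auto
    then show ?thesis
    proof (rule path_induct[where P="\<lambda>D. D \<in> c \<and> lo D = lo B0"])
      show "B0 \<in> c \<and> lo B0 = lo B0" using B0c by simp
    next
      fix D D' assume P: "D \<in> c \<and> lo D = lo B0" and "D \<in> \<sigma>" "D' \<in> \<sigma>" and cr: "crosses D D'"
      have D'c: "D' \<in> c" using cls_closed P cr \<open>D' \<in> \<sigma>\<close> c by blast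
      have ne: "D \<noteq> {}" "D' \<noteq> {}" using \<open>D \<in> \<sigma>\<close> \<open>D' \<in> \<sigma>\<close> pl unfolding pl_def by auto
      have "lo D' = lo D"
      proof (rule ccontr)
        assume "lo D' \<noteq> lo D"
        then have "(lo D \<and> hi D') \<or> (hi D \<and> lo D')" using side[OF D'c] side[of D] P nboth ne by blast
        then show False using cross_both[OF cr] unfolding lo_def hi_def by fastforce
      qed
      then show "D' \<in> c \<and> lo D' = lo B0" using D'c P by simp
    qed
  qed
  obtain Da where Da: "Da \<in> c" "a \<in> Da" using a by auto
  obtain Db where Db: "Db \<in> c" "b \<in> Db" using b by auto
  have "\<not> hi Da"
  proof
    assume "hi Da" then have "j < a" using Da(2) unfolding hi_def by blast
    then show False using j(1) by simp
  qed
  then have "lo Da" using side Da by blast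
  moreover have "\<not> lo Db"
  proof
    assume "lo Db" then have "b < j" using Db(2) unfolding lo_def by blast
    then show False using j(2) by simp
  qed
  ultimately show False using keep[OF Da(1)] keep[OF Db(1)] by simp
qed

lemma inside_block:
  assumes pl: "pl \<sigma>" and B: "B \<in> cls \<sigma> B0" and D: "D \<in> \<sigma>" "D \<notin> cls \<sigma> B0"
    and x: "x \<in> D" "Min B < x" "x < Max B"
  shows "\<forall>y\<in>D. Min B < y \<and> y < Max B"
proof
  fix y assume y: "y \<in> D"
  have Bs: "B \<in> \<sigma>" using B cls_sub by auto
  have fB: "finite B" "B \<noteq> {}" using Bs pl unfolding pl_def by auto
  have "B \<noteq> D" using B D by auto
  then have dj: "B \<inter> D = {}" using pl_disj[OF pl Bs D(1)] by auto
  have "Min B \<in> B" "Max B \<in> B" using fB by auto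
  then have "y \<noteq> Min B" "y \<noteq> Max B" using dj y by auto
  moreover have "\<not> (y < Min B \<or> Max B < y)"
  proof
    assume "y < Min B \<or> Max B < y"
    then have "crosses B D" using mixed_cross[OF fB dj x(1) x(2) x(3) y] by simp
    then have "D \<in> cls \<sigma> B0" using cls_closed B D(1) by blast
    then show False using D by simp
  qed
  ultimately show "Min B < y \<and> y < Max B" by auto
qed

definition sp :: "nat set set \<Rightarrow> nat" where
  "sp c = Max (\<Union>c) - Min (\<Union>c)"

lemma convex_component:
  assumes pl: "pl \<sigma>" and c: "c \<in> components \<sigma>"
    and minc: "\<forall>c'\<in>components \<sigma>. sp c \<le> sp c'"
  shows "\<forall>a\<in>\<Union>c. \<forall>b\<in>\<Union>c. \<forall>j\<in>\<Union>\<sigma>. a < j \<and> j < b \<longrightarrow> j \<in> \<Union>c"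
proof (intro ballI impI)
  fix a b j assume a: "a \<in> \<Union>c" and b: "b \<in> \<Union>c" and j: "j \<in> \<Union>\<sigma>" and ajb: "a < j \<and> j < b"
  show "j \<in> \<Union>c"
  proof (rule ccontr)
    assume jn: "j \<notin> \<Union>c"
    obtain B0 where B0: "B0 \<in> \<sigma>" "c = cls \<sigma> B0" using c components_cls by auto
    obtain B where B: "B \<in> c" "Min B < j" "j < Max B"
      using interval_union[OF pl B0(1) B0(2) a b _ _ jn] ajb by auto
    obtain D0 where D0: "D0 \<in> \<sigma>" "j \<in> D0" using j by auto
    have D0c: "D0 \<notin> c" using D0 jn by auto
    define d where "d = cls \<sigma> D0"
    have dcomp: "d \<in> components \<sigma>" using D0 components_cls d_def by auto
    have ins: "D \<notin> c \<and> (\<forall>y\<in>D. Min B < y \<and> y < Max B)" if "D \<in> d" for D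
    proof -
      have "(D0, D) \<in> (cross_rel \<sigma>)\<^sup>*" using that d_def unfolding cls_def by auto
      then show ?thesis
      proof (rule path_induct[where P="\<lambda>D. D \<notin> c \<and> (\<forall>y\<in>D. Min B < y \<and> y < Max B)"])
        show "D0 \<notin> c \<and> (\<forall>y\<in>D0. Min B < y \<and> y < Max B)"
          using inside_block[OF pl B(1)[unfolded B0(2)] D0(1) D0c[unfolded B0(2)] D0(2) B(2,3)] D0c by simp
      next
        fix D D' assume P: "D \<notin> c \<and> (\<forall>y\<in>D. Min B < y \<and> y < Max B)" and "D \<in> \<sigma>" "D' \<in> \<sigma>"
          and cr: "crosses D D'"
        have D'c: "D' \<notin> c"
        proof
          assume "D' \<in> c"
          then have "D \<in> c" using cls_closed \<open>D \<in> \<sigma>\<close> cr crosses_sym B0(2) by metis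
          then show False using P by simp
        qed
        obtain x y z where xyz: "x \<in> D" "y \<in> D" "z \<in> D'" "x < z" "z < y" using cross_between[OF cr] by auto
        have "Min B < z" "z < Max B" using P xyz by force+
        then show "D' \<notin> c \<and> (\<forall>y\<in>D'. Min B < y \<and> y < Max B)"
          using inside_block[OF pl B(1)[unfolded B0(2)] \<open>D' \<in> \<sigma>\<close> D'c[unfolded B0(2)] xyz(3)] D'c by simp
      qed
    qed
    have fin: "finite (\<Union>\<sigma>)" using pl unfolding pl_def by auto
    have dsub: "\<Union>d \<subseteq> \<Union>\<sigma>" using cls_sub d_def by auto
    have csub: "\<Union>c \<subseteq> \<Union>\<sigma>" using cls_sub B0 by auto
    have fd: "finite (\<Union>d)" using fin dsub finite_subset by blast
    have fc: "finite (\<Union>c)" using fin csub finite_subset by blast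
    have dne: "\<Union>d \<noteq> {}" using D0 d_def cls_self by blast
    have "Max (\<Union>d) \<in> \<Union>d" "Min (\<Union>d) \<in> \<Union>d" using Max_in[OF fd dne] Min_in[OF fd dne] by auto
    then have "Max (\<Union>d) < Max B" "Min B < Min (\<Union>d)" using ins by blast+
    moreover have "Max B \<le> Max (\<Union>c)" "Min (\<Union>c) \<le> Min B"
    proof -
      have fB: "finite B" "B \<noteq> {}" using B pl B0 cls_sub unfolding pl_def by blast+
      have "Max B \<in> \<Union>c" "Min B \<in> \<Union>c" using Max_in[OF fB] Min_in[OF fB] B(1) by auto
      then show "Max B \<le> Max (\<Union>c)" "Min (\<Union>c) \<le> Min B" using fc by auto
    qed
    moreover have "Min (\<Union>d) \<le> Max (\<Union>d)" using Max_ge[OF fd Min_in[OF fd dne]] .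
    ultimately have "sp d < sp c" unfolding sp_def by linarith
    then show False using minc dcomp by fastforce
  qed
qed


lemma finite_components: "finite \<sigma> \<Longrightarrow> finite (components \<sigma>)"
  unfolding components_cls by simp

lemma exists_min_sp:
  assumes "finite \<sigma>" "\<sigma> \<noteq> {}"
  shows "\<exists>c\<in>components \<sigma>. \<forall>c'\<in>components \<sigma>. sp c \<le> sp c'"
proof -
  have f: "finite (sp ` components \<sigma>)" using finite_components assms by simp
  have ne: "sp ` components \<sigma> \<noteq> {}" using assms unfolding components_cls by simp
  obtain c where c: "c \<in> components \<sigma>" "sp c = Min (sp ` components \<sigma>)" using Min_in[OF f ne] by auto
  show ?thesis using c Min_le[OF f] by force
qed

context pyr begin

lemma group:
  assumes "pl \<sigma>" "finite A" "\<forall>a\<in>A. G a \<subseteq> \<sigma>" "(\<Union>a\<in>A. G a) = \<sigma>"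
    "\<forall>a\<in>A. \<forall>b\<in>A. a \<noteq> b \<longrightarrow> G a \<inter> G b = {}"
    "\<forall>a\<in>A. \<forall>b\<in>A. a \<noteq> b \<longrightarrow> (\<forall>B\<in>G a. \<forall>B'\<in>G b. \<not> crosses B B')"
  shows "Phi \<sigma> X = (\<Prod>a\<in>A. Phi (G a) X)"
  using assms
proof (induction "card \<sigma>" arbitrary: \<sigma> G rule: less_induct)
  case less
  note pl = less.prems(1) and finA = less.prems(2) and Gsub = less.prems(3) and Gun = less.prems(4)
    and Gdis = less.prems(5) and Gcr = less.prems(6)
  show ?case
  proof (cases "\<sigma> = {}")
    case True
    then have "\<forall>a\<in>A. G a = {}" using Gsub by auto
    then show ?thesis using True by (simp add: Phi_empty)
  next
    case False
    have fs: "finite \<sigma>" using pl unfolding pl_def by auto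
    obtain c where c: "c \<in> components \<sigma>" and minc: "\<forall>c'\<in>components \<sigma>. sp c \<le> sp c'"
      using exists_min_sp[OF fs False] by auto
    obtain B0 where B0: "B0 \<in> \<sigma>" "c = cls \<sigma> B0" using c components_cls by auto
    obtain a0 where a0: "a0 \<in> A" "B0 \<in> G a0" using B0 Gun by auto
    have cG: "c \<subseteq> G a0"
    proof
      fix D assume "D \<in> c"
      then have "(B0, D) \<in> (cross_rel \<sigma>)\<^sup>*" using B0 unfolding cls_def by auto
      then show "D \<in> G a0"
      proof (rule path_induct[where P="\<lambda>D. D \<in> G a0"])
        show "B0 \<in> G a0" by (rule a0(2))
      next
        fix D D' assume "D \<in> G a0" "D \<in> \<sigma>" "D' \<in> \<sigma>" "crosses D D'"
        then obtain b where b: "b \<in> A" "D' \<in> G b" using Gun by auto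
        show "D' \<in> G a0"
        proof (rule ccontr)
          assume "D' \<notin> G a0"
          then have "b \<noteq> a0" using b by auto
          then have "a0 \<noteq> b" by simp
          then have "\<forall>B\<in>G a0. \<forall>B'\<in>G b. \<not> crosses B B'" using Gcr a0(1) b(1) by simp
          then have "\<not> crosses D D'" using b(2) \<open>D \<in> G a0\<close> by simp
          then show False using \<open>crosses D D'\<close> by simp
        qed
      qed
    qed
    have csub: "c \<subseteq> \<sigma>" using B0 cls_sub by auto
    have cne: "c \<noteq> {}" using B0 cls_self by auto
    have conv: "\<forall>a\<in>\<Union>c. \<forall>b\<in>\<Union>c. \<forall>j\<in>\<Union>\<sigma>. a < j \<and> j < b \<longrightarrow> j \<in> \<Union>c"
      using convex_component[OF pl c minc] .
    have e1: "Phi \<sigma> X = Phi c X * Phi (\<sigma> - c) X"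
      by (rule split[OF pl csub cne conv])
    have Ga0: "G a0 \<subseteq> \<sigma>" using Gsub a0 by auto
    have plG: "pl (G a0)" using pl_sub[OF pl Ga0] .
    have conv2: "\<forall>a\<in>\<Union>c. \<forall>b\<in>\<Union>c. \<forall>j\<in>\<Union>(G a0). a < j \<and> j < b \<longrightarrow> j \<in> \<Union>c"
      using conv Ga0 by blast
    have e2: "Phi (G a0) X = Phi c X * Phi (G a0 - c) X"
      by (rule split[OF plG cG cne conv2])
    define G' where "G' = G(a0 := G a0 - c)"
    have card_lt: "card (\<sigma> - c) < card \<sigma>"
      using fs csub cne by (intro psubset_card_mono) auto
    have G'sub: "\<forall>a\<in>A. G' a \<subseteq> \<sigma> - c"
    proof
      fix a assume a: "a \<in> A"
      show "G' a \<subseteq> \<sigma> - c"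
      proof (cases "a = a0")
        case True then show ?thesis using Ga0 unfolding G'_def by auto
      next
        case False
        then have "G a \<inter> G a0 = {}" using Gdis a a0 by auto
        then show ?thesis using cG Gsub a False unfolding G'_def by auto
      qed
    qed
    have G'un: "(\<Union>a\<in>A. G' a) = \<sigma> - c"
    proof
      show "(\<Union>a\<in>A. G' a) \<subseteq> \<sigma> - c" using G'sub by auto
    next
      show "\<sigma> - c \<subseteq> (\<Union>a\<in>A. G' a)"
      proof
        fix B assume B: "B \<in> \<sigma> - c"
        then obtain a where a: "a \<in> A" "B \<in> G a" using Gun by auto
        then have "B \<in> G' a" using B unfolding G'_def by auto
        then show "B \<in> (\<Union>a\<in>A. G' a)" using a by auto
      qed
    qed
    have G'le: "\<And>a. G' a \<subseteq> G a" unfolding G'_def by auto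
    have G'dis: "\<forall>a\<in>A. \<forall>b\<in>A. a \<noteq> b \<longrightarrow> G' a \<inter> G' b = {}"
      using Gdis G'le by blast
    have G'cr: "\<forall>a\<in>A. \<forall>b\<in>A. a \<noteq> b \<longrightarrow> (\<forall>B\<in>G' a. \<forall>B'\<in>G' b. \<not> crosses B B')"
      using Gcr G'le by blast
    have IH: "Phi (\<sigma> - c) X = (\<Prod>a\<in>A. Phi (G' a) X)"
      using less.hyps[OF card_lt pl_sub[OF pl] finA G'sub G'un G'dis G'cr] by simp
    have p1: "(\<Prod>a\<in>A. Phi (G a) X) = Phi (G a0) X * (\<Prod>a\<in>A - {a0}. Phi (G a) X)"
      using prod.remove[OF finA a0(1)] by simp
    have p2: "(\<Prod>a\<in>A. Phi (G' a) X) = Phi (G a0 - c) X * (\<Prod>a\<in>A - {a0}. Phi (G a) X)"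
      using prod.remove[OF finA a0(1), of "\<lambda>a. Phi (G' a) X"] unfolding G'_def by simp
    show ?thesis using e1 e2 IH p1 p2 by (simp add: mult.assoc)
  qed
qed

lemma phi_components:
  assumes "pl \<sigma>"
  shows "Phi \<sigma> X = (\<Prod>c\<in>components \<sigma>. Phi c X)"
proof -
  have f: "finite (components \<sigma>)" using assms finite_components unfolding pl_def by auto
  have s: "\<forall>a\<in>components \<sigma>. id a \<subseteq> \<sigma>" using cls_sub unfolding components_cls by auto
  have u: "(\<Union>a\<in>components \<sigma>. id a) = \<sigma>"
  proof
    show "(\<Union>a\<in>components \<sigma>. id a) \<subseteq> \<sigma>" using s by auto
    show "\<sigma> \<subseteq> (\<Union>a\<in>components \<sigma>. id a)"
    proof
      fix B assume "B \<in> \<sigma>"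
      then have "B \<in> cls \<sigma> B" "cls \<sigma> B \<in> components \<sigma>" using cls_self components_cls by auto
      then show "B \<in> (\<Union>a\<in>components \<sigma>. id a)" by auto
    qed
  qed
  have d: "\<forall>a\<in>components \<sigma>. \<forall>b\<in>components \<sigma>. a \<noteq> b \<longrightarrow> id a \<inter> id b = {}"
  proof (intro ballI impI)
    fix a b assume a: "a \<in> components \<sigma>" and b: "b \<in> components \<sigma>" and ab: "a \<noteq> b"
    obtain B1 where a': "a = cls \<sigma> B1" using a components_cls by auto
    obtain B2 where b': "b = cls \<sigma> B2" using b components_cls by auto
    show "id a \<inter> id b = {}"
    proof (rule ccontr)
      assume "id a \<inter> id b \<noteq> {}"
      then obtain B where "B \<in> cls \<sigma> B1" "B \<in> cls \<sigma> B2" using a' b' by auto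
      then have "a = b" using cls_disj a' b' by metis
      then show False using ab by simp
    qed
  qed
  have c: "\<forall>a\<in>components \<sigma>. \<forall>b\<in>components \<sigma>. a \<noteq> b \<longrightarrow> (\<forall>B\<in>id a. \<forall>B'\<in>id b. \<not> crosses B B')"
  proof (intro ballI impI)
    fix a b B B' assume a: "a \<in> components \<sigma>" and b: "b \<in> components \<sigma>" and ab: "a \<noteq> b"
      and B: "B \<in> id a" and B': "B' \<in> id b"
    obtain B1 where a': "a = cls \<sigma> B1" using a components_cls by auto
    obtain B2 where b': "b = cls \<sigma> B2" using b components_cls by auto
    show "\<not> crosses B B'"
    proof
      assume "crosses B B'"
      moreover have "B' \<in> \<sigma>" using B' b' cls_sub by auto
      ultimately have "B' \<in> cls \<sigma> B1" using cls_closed B a' by auto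
      then have "a = b" using cls_disj a' b' B' by (metis id_apply)
      then show False using ab by simp
    qed
  qed
  show ?thesis using group[OF assms f s u d c] by simp
qed

end

lemma mw_map: "mixed_word iota (map g xs) (map X xs) = prod_list (map (\<lambda>j. iota (g j) (X j)) xs)"
  unfolding mixed_word_def by (induction xs) auto

lemma map_conv_nth: "map f xs = map (\<lambda>i. f (xs ! i)) [0..<length xs]"
  by (rule nth_equalityI) auto

lemma infinite_compl_nat: "finite (F :: nat set) \<Longrightarrow> infinite (- F)"
  using Diff_infinite_finite[OF _ infinite_UNIV_nat] by (simp add: Compl_eq_Diff_UNIV)

lemma ext_bij:
  fixes l1 l2 :: "'b \<Rightarrow> nat"
  assumes "finite A" "inj_on l1 A" "inj_on l2 A"
  shows "\<exists>\<tau>. bij \<tau> \<and> (\<forall>B\<in>A. \<tau> (l1 B) = l2 B)"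
proof -
  define h where "h = l2 \<circ> the_inv_into A l1"
  have h: "bij_betw h (l1 ` A) (l2 ` A)"
    unfolding h_def
    by (rule bij_betw_trans[OF bij_betw_the_inv_into[OF inj_on_imp_bij_betw[OF assms(2)]]
          inj_on_imp_bij_betw[OF assms(3)]])
  have i1: "infinite (- (l1 ` A))" "infinite (- (l2 ` A))" using infinite_compl_nat assms(1) by auto
  define g where "g = enumerate (- (l2 ` A)) \<circ> inv_into UNIV (enumerate (- (l1 ` A)))"
  have g: "bij_betw g (- (l1 ` A)) (- (l2 ` A))"
    unfolding g_def
    by (rule bij_betw_trans[OF bij_betw_inv_into[OF bij_enumerate[OF i1(1)]] bij_enumerate[OF i1(2)]])
  have "bij_betw (\<lambda>x. if x \<in> l1 ` A then h x else g x) (l1 ` A \<union> - (l1 ` A)) (l2 ` A \<union> - (l2 ` A))"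
    by (rule bij_betw_disjoint_Un[OF h g]) auto
  then have b: "bij (\<lambda>x. if x \<in> l1 ` A then h x else g x)" by simp
  have "\<forall>B\<in>A. (\<lambda>x. if x \<in> l1 ` A then h x else g x) (l1 B) = l2 B"
    using assms(2) unfolding h_def by (auto simp: the_inv_into_f_f)
  then show ?thesis using b by blast
qed

context pyr begin

lemma exch: "length idx = length Ys \<Longrightarrow> bij \<tau> \<Longrightarrow>
    phiU (mixed_word iota idx Ys) = phiU (mixed_word iota (map \<tau> idx) Ys)"
  using ex unfolding exchangeability_system_def by blast

lemma block_in: "pl \<sigma> \<Longrightarrow> j \<in> \<Union>\<sigma> \<Longrightarrow> block_of \<sigma> j \<in> \<sigma> \<and> j \<in> block_of \<sigma> j"
proof -
  assume "pl \<sigma>" "j \<in> \<Union>\<sigma>"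
  then obtain B where "B \<in> \<sigma>" "j \<in> B" by auto
  then show ?thesis using block_of_eq[of \<sigma> B j] \<open>pl \<sigma>\<close> unfolding pl_def by auto
qed

lemma relabel:
  assumes pl: "pl \<sigma>" and i1: "inj_on l1 \<sigma>" and i2: "inj_on l2 \<sigma>" and xs: "set xs \<subseteq> \<Union>\<sigma>"
  shows "phiU (prod_list (map (\<lambda>j. iota (l1 (block_of \<sigma> j)) (X j)) xs)) =
         phiU (prod_list (map (\<lambda>j. iota (l2 (block_of \<sigma> j)) (X j)) xs))"
proof -
  obtain \<tau> where \<tau>: "bij \<tau>" "\<forall>B\<in>\<sigma>. \<tau> (l1 B) = l2 B"
    using ext_bij[OF _ i1 i2] pl unfolding pl_def by blast
  have "phiU (prod_list (map (\<lambda>j. iota (l1 (block_of \<sigma> j)) (X j)) xs))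
      = phiU (mixed_word iota (map (\<lambda>j. l1 (block_of \<sigma> j)) xs) (map X xs))"
    by (simp add: mw_map)
  also have "\<dots> = phiU (mixed_word iota (map \<tau> (map (\<lambda>j. l1 (block_of \<sigma> j)) xs)) (map X xs))"
    by (rule exch) (auto simp: \<tau>)
  also have "map \<tau> (map (\<lambda>j. l1 (block_of \<sigma> j)) xs) = map (\<lambda>j. l2 (block_of \<sigma> j)) xs"
    unfolding map_map
  proof (rule map_cong[OF refl])
    fix j assume "j \<in> set xs"
    then have "block_of \<sigma> j \<in> \<sigma>" using block_in[OF pl] xs by blast
    then show "(\<tau> \<circ> (\<lambda>j. l1 (block_of \<sigma> j))) j = l2 (block_of \<sigma> j)" using \<tau>(2) by simp
  qed
  finally show ?thesis by (simp add: mw_map)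
qed

lemma inj_Min: "pl \<sigma> \<Longrightarrow> inj_on Min \<sigma>"
proof (rule inj_onI)
  fix B1 B2 assume pl: "pl \<sigma>" and B: "B1 \<in> \<sigma>" "B2 \<in> \<sigma>" "Min B1 = Min B2"
  have "finite B1" "B1 \<noteq> {}" "finite B2" "B2 \<noteq> {}" using pl B unfolding pl_def by auto
  then have "Min B1 \<in> B1" "Min B2 \<in> B2" using Min_in by blast+
  then have "B1 \<inter> B2 \<noteq> {}" using B by auto
  then show "B1 = B2" using pl_disj[OF pl B(1,2)] by blast
qed

lemma phi_part_Phi:
  assumes "\<sigma> \<in> set_partitions (length Xs)"
  shows "phi_part phiU iota \<sigma> Xs = Phi \<sigma> (nth Xs)"
proof -
  have u: "\<Union>\<sigma> = {0..<length Xs}" using assms unfolding set_partitions_def partition_on_def by auto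
  have "phi_part phiU iota \<sigma> Xs = phiU (mixed_word iota (map (\<lambda>j. Min (block_of \<sigma> j)) [0..<length Xs])
      (map (nth Xs) [0..<length Xs]))"
    unfolding phi_part_def by (simp add: map_nth)
  also have "\<dots> = Phi \<sigma> (nth Xs)" unfolding mw_map Phi_def u by simp
  finally show ?thesis .
qed

lemma phi_transport:
  assumes pl: "pl \<rho>"
  shows "phi_part phiU iota (transport_part \<rho>) (sub_list \<rho> Xs) = Phi \<rho> (nth Xs)"
proof -
  define s where "s = sorted_list_of_set (\<Union>\<rho>)"
  define m where "m = length s"
  have fin: "finite (\<Union>\<rho>)" using pl unfolding pl_def by auto
  have sets: "set s = \<Union>\<rho>" using fin unfolding s_def by simp
  define tB where "tB B = {i. i < m \<and> s ! i \<in> B}" for B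
  have tp: "transport_part \<rho> = tB ` \<rho>" unfolding transport_part_def Let_def tB_def s_def m_def by simp
  have sl: "sub_list \<rho> Xs = map (\<lambda>i. Xs ! (s ! i)) [0..<m]"
    unfolding sub_list_def s_def[symmetric] m_def by (rule map_conv_nth)
  have tBne: "tB B \<noteq> {}" if "B \<in> \<rho>" for B
  proof -
    have "B \<noteq> {}" using that pl unfolding pl_def by simp
    then obtain x where "x \<in> B" by blast
    then have "x \<in> set s" using sets that by blast
    then obtain i where "i < m" "s ! i = x" unfolding m_def by (auto simp: in_set_conv_nth)
    then show ?thesis unfolding tB_def using \<open>x \<in> B\<close> by auto
  qed
  have tBfin: "finite (tB B)" for B unfolding tB_def by auto
  have dis: "disjoint (tB ` \<rho>)"
  proof (rule pairwiseI)
    fix X1 X2 assume "X1 \<in> tB ` \<rho>" "X2 \<in> tB ` \<rho>" "X1 \<noteq> X2"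
    then obtain B1 B2 where "B1 \<in> \<rho>" "B2 \<in> \<rho>" "X1 = tB B1" "X2 = tB B2" "B1 \<noteq> B2" by auto
    then have "B1 \<inter> B2 = {}" using pl_disj[OF pl] by simp
    then show "disjnt X1 X2" using \<open>X1 = tB B1\<close> \<open>X2 = tB B2\<close> unfolding tB_def disjnt_def by auto
  qed
  have blk: "block_of (tB ` \<rho>) i = tB (block_of \<rho> (s ! i))" if "i < m" for i
  proof -
    have "s ! i \<in> \<Union>\<rho>" using that sets unfolding m_def by (metis nth_mem)
    then have b: "block_of \<rho> (s ! i) \<in> \<rho>" "s ! i \<in> block_of \<rho> (s ! i)" using block_in[OF pl] by auto
    show ?thesis by (rule block_of_eq[OF dis]) (use b that in \<open>auto simp: tB_def\<close>)
  qed
  define l where "l B = Min (tB B)" for B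
  have inj_l: "inj_on l \<rho>"
  proof (rule inj_onI)
    fix B1 B2 assume B: "B1 \<in> \<rho>" "B2 \<in> \<rho>" "l B1 = l B2"
    have "l B1 \<in> tB B1" "l B2 \<in> tB B2" unfolding l_def using Min_in[OF tBfin tBne[OF B(1)]] Min_in[OF tBfin tBne[OF B(2)]] by auto
    then have "s ! (l B1) \<in> B1" "s ! (l B1) \<in> B2" using B(3) unfolding tB_def by auto
    then show "B1 = B2" using pl_disj[OF pl B(1,2)] by blast
  qed
  have "phi_part phiU iota (transport_part \<rho>) (sub_list \<rho> Xs)
      = phiU (mixed_word iota (map (\<lambda>i. Min (block_of (tB ` \<rho>) i)) [0..<m]) (map (\<lambda>i. Xs ! (s ! i)) [0..<m]))"
    unfolding phi_part_def tp sl by simp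
  also have "\<dots> = phiU (prod_list (map (\<lambda>i. iota (l (block_of \<rho> (s ! i))) (Xs ! (s ! i))) [0..<m]))"
  proof -
    have eq: "map (\<lambda>i. iota (Min (block_of (tB ` \<rho>) i)) (Xs ! (s ! i))) [0..<m] =
          map (\<lambda>i. iota (l (block_of \<rho> (s ! i))) (Xs ! (s ! i))) [0..<m]"
      by (rule map_cong[OF refl]) (simp add: blk l_def)
    show ?thesis unfolding mw_map eq by (rule refl)
  qed
  also have "map (\<lambda>i. iota (l (block_of \<rho> (s ! i))) (Xs ! (s ! i))) [0..<m]
      = map (\<lambda>j. iota (l (block_of \<rho> j)) (Xs ! j)) s"
    unfolding m_def by (rule map_conv_nth[symmetric])
  also have "phiU (prod_list (map (\<lambda>j. iota (l (block_of \<rho> j)) (Xs ! j)) s))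
      = phiU (prod_list (map (\<lambda>j. iota (Min (block_of \<rho> j)) (Xs ! j)) s))"
    by (rule relabel[OF pl inj_l inj_Min[OF pl]]) (simp add: sets)
  also have "\<dots> = Phi \<rho> (nth Xs)" unfolding Phi_def s_def by simp
  finally show ?thesis .
qed

lemma phi_sub_Phi: "pl c \<Longrightarrow> phi_sub phiU iota c Xs = Phi c (nth Xs)"
  unfolding phi_sub_def by (rule phi_transport)

lemma pl_partition: "\<sigma> \<in> set_partitions n \<Longrightarrow> pl \<sigma>"
proof -
  assume "\<sigma> \<in> set_partitions n"
  then have p: "partition_on {0..<n} \<sigma>" unfolding set_partitions_def by simp
  have "finite \<sigma>" using finite_elements[OF _ p] by simp
  moreover have "\<forall>B\<in>\<sigma>. finite B \<and> B \<noteq> {}"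
  proof
    fix B assume B: "B \<in> \<sigma>"
    then have "B \<subseteq> {0..<n}" using p unfolding partition_on_def by auto
    then have "finite B" using finite_subset by blast
    moreover have "B \<noteq> {}" using p B unfolding partition_on_def by auto
    ultimately show "finite B \<and> B \<noteq> {}" by simp
  qed
  ultimately show "pl \<sigma>" using p unfolding pl_def partition_on_def by simp
qed

theorem part1:
  assumes "\<pi> \<in> set_partitions (length Xs)"
  shows "phi_part phiU iota \<pi> Xs = (\<Prod>c\<in>components \<pi>. phi_sub phiU iota c Xs)"
proof -
  have pl: "pl \<pi>" using pl_partition[OF assms] .
  have "phi_part phiU iota \<pi> Xs = (\<Prod>c\<in>components \<pi>. Phi c (nth Xs))"
    using phi_part_Phi[OF assms] phi_components[OF pl] by simp
  also have "\<dots> = (\<Prod>c\<in>components \<pi>. phi_sub phiU iota c Xs)"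
  proof (rule prod.cong[OF refl])
    fix c assume "c \<in> components \<pi>"
    then have "c \<subseteq> \<pi>" using cls_sub components_cls by auto
    then show "Phi c (nth Xs) = phi_sub phiU iota c Xs" using phi_sub_Phi pl_sub[OF pl] by simp
  qed
  finally show ?thesis .
qed

end

definition po :: "'c set \<Rightarrow> ('c \<Rightarrow> 'c \<Rightarrow> bool) \<Rightarrow> bool" where
  "po P le \<longleftrightarrow> (\<forall>x\<in>P. le x x) \<and> (\<forall>x\<in>P. \<forall>y\<in>P. \<forall>z\<in>P. le x y \<longrightarrow> le y z \<longrightarrow> le x z) \<and>
     (\<forall>x\<in>P. \<forall>y\<in>P. le x y \<longrightarrow> le y x \<longrightarrow> x = y)"

definition iv :: "'c set \<Rightarrow> ('c \<Rightarrow> 'c \<Rightarrow> bool) \<Rightarrow> 'c \<Rightarrow> 'c \<Rightarrow> 'c set" where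
  "iv P le x y = {z\<in>P. le x z \<and> le z y}"

lemma po_refl: "po P le \<Longrightarrow> x \<in> P \<Longrightarrow> le x x"
  unfolding po_def by blast
lemma po_trans: "po P le \<Longrightarrow> x \<in> P \<Longrightarrow> y \<in> P \<Longrightarrow> z \<in> P \<Longrightarrow> le x y \<Longrightarrow> le y z \<Longrightarrow> le x z"
  unfolding po_def by blast
lemma po_antisym: "po P le \<Longrightarrow> x \<in> P \<Longrightarrow> y \<in> P \<Longrightarrow> le x y \<Longrightarrow> le y x \<Longrightarrow> x = y"
  unfolding po_def by blast

lemma mf_refl: "mobius_fuel k P le x x = 1"
  by (cases k) auto

lemma mf_nle: "x \<noteq> y \<Longrightarrow> \<not> le x y \<Longrightarrow> mobius_fuel k P le x y = 0"
  by (cases k) auto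

lemma iv_sub_lt:
  assumes "finite P" "po P le" "x \<in> P" "y \<in> P" "z \<in> P" "le z y" "z \<noteq> y" "le x y"
  shows "card (iv P le x z) < card (iv P le x y)"
proof -
  have "iv P le x z \<subseteq> iv P le x y - {y}"
  proof
    fix w assume w: "w \<in> iv P le x z"
    then have "le w y" using assms po_trans[OF assms(2), of w z y] unfolding iv_def by blast
    moreover have "w \<noteq> y"
    proof
      assume "w = y"
      then have "le y z" using w unfolding iv_def by auto
      then show False using assms po_antisym[OF assms(2), of y z] by blast
    qed
    ultimately show "w \<in> iv P le x y - {y}" using w unfolding iv_def by auto
  qed
  moreover have "y \<in> iv P le x y" using assms po_refl[OF assms(2) assms(4)] unfolding iv_def by auto
  moreover have "finite (iv P le x y)" using assms(1) unfolding iv_def by auto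
  ultimately show ?thesis using psubset_card_mono[of "iv P le x y" "iv P le x z"] by blast
qed

lemma mf_stab:
  assumes fin: "finite P" and po: "po P le" and x: "x \<in> P"
  shows "y \<in> P \<Longrightarrow> card (iv P le x y) \<le> k1 \<Longrightarrow> card (iv P le x y) \<le> k2 \<Longrightarrow>
    mobius_fuel k1 P le x y = mobius_fuel k2 P le x y"
proof (induction "card (iv P le x y)" arbitrary: y k1 k2 rule: less_induct)
  case less
  show ?case
  proof (cases "x = y")
    case True then show ?thesis by (simp add: mf_refl)
  next
    case ne: False
    show ?thesis
    proof (cases "le x y")
      case False then show ?thesis using ne by (simp add: mf_nle)
    next
      case True
      have fi: "finite (iv P le x y)" using fin unfolding iv_def by auto
      have "{x, y} \<subseteq> iv P le x y" using True x less.prems po_refl[OF po x] po_refl[OF po less.prems(1)] unfolding iv_def by auto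
      then have "card {x, y} \<le> card (iv P le x y)" using fi card_mono by blast
      then have c2: "2 \<le> card (iv P le x y)" using ne by simp
      obtain k1' where k1: "k1 = Suc k1'" using c2 less.prems by (cases k1) auto
      obtain k2' where k2: "k2 = Suc k2'" using c2 less.prems by (cases k2) auto
      have "mobius_fuel k1' P le x z = mobius_fuel k2' P le x z"
        if z: "z \<in> {z \<in> P. le x z \<and> le z y \<and> z \<noteq> y}" for z
      proof -
        have lt: "card (iv P le x z) < card (iv P le x y)"
          using iv_sub_lt[OF fin po x less.prems(1)] z True by auto
        show ?thesis
          by (rule less.hyps[OF lt]) (use z lt less.prems k1 k2 in auto)
      qed
      then show ?thesis using ne True k1 k2 by (auto intro!: sum.cong)
    qed
  qed
qed

lemma card_iv_le: "finite P \<Longrightarrow> card (iv P le x y) \<le> card P"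
  unfolding iv_def by (rule card_mono) auto

lemma mob_fuel:
  assumes "finite P" "po P le" "x \<in> P" "y \<in> P" "card (iv P le x y) \<le> k"
  shows "mobius P le x y = mobius_fuel k P le x y"
  unfolding mobius_def using mf_stab[OF assms(1-3) assms(4) card_iv_le[OF assms(1)] assms(5)] .

lemma mob_sum:
  assumes fin: "finite P" and po: "po P le" and x: "x \<in> P" and y: "y \<in> P" and xy: "le x y"
  shows "(\<Sum>z\<in>iv P le x y. mobius P le x z) = (if x = y then 1 else 0)"
proof (cases "x = y")
  case True
  have "iv P le x x = {x}" using po_refl[OF po x] po_antisym[OF po, of _ x] x unfolding iv_def by auto
  then show ?thesis using True by (simp add: mobius_def mf_refl)
next
  case ne: False
  define W where "W = {z \<in> P. le x z \<and> le z y \<and> z \<noteq> y}"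
  have ivW: "iv P le x y = insert y W" "y \<notin> W" using y xy po_refl[OF po y] unfolding W_def iv_def by auto
  have fW: "finite W" using fin unfolding W_def by auto
  have fi: "finite (iv P le x y)" using fin unfolding iv_def by auto
  have "{x, y} \<subseteq> iv P le x y" using xy x y po_refl[OF po x] po_refl[OF po y] unfolding iv_def by auto
  then have "card {x, y} \<le> card (iv P le x y)" using fi card_mono by blast
  then have c2: "2 \<le> card (iv P le x y)" using ne by simp
  then obtain k where k: "card P = Suc k" using card_iv_le[OF fin, of le x y]
    by (cases "card P") auto
  have "mobius P le x y = - (\<Sum>z\<in>W. mobius_fuel k P le x z)"
    unfolding mobius_def k W_def using ne xy by simp
  also have "(\<Sum>z\<in>W. mobius_fuel k P le x z) = (\<Sum>z\<in>W. mobius P le x z)"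
  proof (rule sum.cong[OF refl])
    fix z assume z: "z \<in> W"
    have "card (iv P le x z) < card (iv P le x y)"
      using iv_sub_lt[OF fin po x y] z xy unfolding W_def by auto
    moreover have "card (iv P le x y) \<le> Suc k" using card_iv_le[OF fin] k by metis
    ultimately have "card (iv P le x z) \<le> k" by simp
    then show "mobius_fuel k P le x z = mobius P le x z"
      using mob_fuel[OF fin po x] z unfolding W_def by auto
  qed
  finally show ?thesis using ivW fW ne by simp
qed

lemma mob_unique:
  assumes fin: "finite P" and po: "po P le" and x: "x \<in> P"
    and H: "\<forall>y\<in>P. le x y \<and> le y y0 \<longrightarrow> (\<Sum>z\<in>iv P le x y. g z) = (if x = y then 1 else 0)"
  shows "y \<in> P \<Longrightarrow> le x y \<Longrightarrow> le y y0 \<Longrightarrow> y0 \<in> P \<Longrightarrow> g y = mobius P le x y"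
proof (induction "card (iv P le x y)" arbitrary: y rule: less_induct)
  case less
  define W where "W = iv P le x y - {y}"
  have ivW: "iv P le x y = insert y W" "y \<notin> W" using less.prems po_refl[OF po less.prems(1)] unfolding W_def iv_def by auto
  have fW: "finite W" using fin unfolding W_def iv_def by auto
  have eq: "(\<Sum>z\<in>W. g z) = (\<Sum>z\<in>W. mobius P le x z)"
  proof (rule sum.cong[OF refl])
    fix z assume z: "z \<in> W"
    have zP: "z \<in> P" "le x z" "le z y" "z \<noteq> y" using z unfolding W_def iv_def by auto
    have lt: "card (iv P le x z) < card (iv P le x y)"
      using iv_sub_lt[OF fin po x less.prems(1) zP(1) zP(3) zP(4) less.prems(2)] .
    have "le z y0" using po_trans[OF po zP(1) less.prems(1) less.prems(4) zP(3) less.prems(3)] .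
    then show "g z = mobius P le x z" using less.hyps[OF lt zP(1) zP(2)] less.prems by simp
  qed
  have "(\<Sum>z\<in>iv P le x y. g z) = (\<Sum>z\<in>iv P le x y. mobius P le x z)"
    using H less.prems mob_sum[OF fin po x less.prems(1) less.prems(2)] by simp
  then show ?case unfolding ivW(1) using fW ivW(2) eq by simp
qed

lemma mf_iso:
  assumes b: "bij_betw f P Q" and le: "\<forall>x\<in>P. \<forall>y\<in>P. le x y \<longleftrightarrow> le' (f x) (f y)" and x: "x \<in> P"
  shows "y \<in> P \<Longrightarrow> mobius_fuel k P le x y = mobius_fuel k Q le' (f x) (f y)"
proof (induction k arbitrary: y)
  case 0
  have "x = y \<longleftrightarrow> f x = f y" using b x 0 unfolding bij_betw_def inj_on_def by blast
  then show ?case by simp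
next
  case (Suc k)
  have eqv: "x = y \<longleftrightarrow> f x = f y" using b x Suc.prems unfolding bij_betw_def inj_on_def by blast
  have lexy: "le x y \<longleftrightarrow> le' (f x) (f y)" using le x Suc.prems by blast
  define W where "W = {z \<in> P. le x z \<and> le z y \<and> z \<noteq> y}"
  have WP: "W \<subseteq> P" unfolding W_def by auto
  have img: "{z \<in> Q. le' (f x) z \<and> le' z (f y) \<and> z \<noteq> f y} = f ` W"
  proof
    show "f ` W \<subseteq> {z \<in> Q. le' (f x) z \<and> le' z (f y) \<and> z \<noteq> f y}"
    proof
      fix w assume "w \<in> f ` W"
      then obtain z where z: "z \<in> P" "le x z" "le z y" "z \<noteq> y" "w = f z" unfolding W_def by auto
      have "f z \<in> Q" using b z(1) bij_betwE by blast
      moreover have "le' (f x) (f z)" "le' (f z) (f y)" using le x z Suc.prems by blast+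
      moreover have "f z \<noteq> f y" using b z Suc.prems unfolding bij_betw_def inj_on_def by blast
      ultimately show "w \<in> {z \<in> Q. le' (f x) z \<and> le' z (f y) \<and> z \<noteq> f y}" using z by auto
    qed
  next
    show "{z \<in> Q. le' (f x) z \<and> le' z (f y) \<and> z \<noteq> f y} \<subseteq> f ` W"
    proof
      fix w assume w: "w \<in> {z \<in> Q. le' (f x) z \<and> le' z (f y) \<and> z \<noteq> f y}"
      then obtain z where z: "z \<in> P" "w = f z" using b unfolding bij_betw_def by auto
      have "le x z" "le z y" using le x z w Suc.prems by auto
      moreover have "z \<noteq> y" using z w by auto
      ultimately show "w \<in> f ` W" using z unfolding W_def by auto
    qed
  qed
  have inj: "inj_on f W" using b WP unfolding bij_betw_def using inj_on_subset by blast
  have "(\<Sum>z\<in>{z \<in> Q. le' (f x) z \<and> le' z (f y) \<and> z \<noteq> f y}. mobius_fuel k Q le' (f x) z)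
      = (\<Sum>z\<in>W. mobius_fuel k Q le' (f x) (f z))"
    unfolding img by (rule sum.reindex[OF inj, unfolded comp_def])
  also have "\<dots> = (\<Sum>z\<in>W. mobius_fuel k P le x z)"
    using Suc.IH WP by (auto intro!: sum.cong)
  finally have s: "(\<Sum>z\<in>{z \<in> Q. le' (f x) z \<and> le' z (f y) \<and> z \<noteq> f y}. mobius_fuel k Q le' (f x) z)
      = (\<Sum>z\<in>W. mobius_fuel k P le x z)" .
  show ?case using eqv lexy s unfolding W_def by simp
qed

lemma mob_iso:
  assumes b: "bij_betw f P Q" and le: "\<forall>x\<in>P. \<forall>y\<in>P. le x y \<longleftrightarrow> le' (f x) (f y)"
    and x: "x \<in> P" and y: "y \<in> P"
  shows "mobius P le x y = mobius Q le' (f x) (f y)"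
  unfolding mobius_def using mf_iso[OF b le x y] bij_betw_same_card[OF b] by simp

definition Parts :: "nat set \<Rightarrow> nat set set set" where
  "Parts S = {\<sigma>. partition_on S \<sigma>}"

lemma set_partitions_Parts: "set_partitions n = Parts {0..<n}"
  unfolding set_partitions_def Parts_def by simp

lemma finite_Parts: "finite S \<Longrightarrow> finite (Parts S)"
  unfolding Parts_def by (rule finitely_many_partition_on)

lemma Parts_pl: "finite S \<Longrightarrow> \<sigma> \<in> Parts S \<Longrightarrow> pl \<sigma>"
proof -
  assume fS: "finite S" and "\<sigma> \<in> Parts S"
  then have p: "partition_on S \<sigma>" unfolding Parts_def by simp
  have "finite \<sigma>" using finite_elements[OF fS p] .
  moreover have "\<forall>B\<in>\<sigma>. finite B \<and> B \<noteq> {}"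
  proof
    fix B assume B: "B \<in> \<sigma>"
    then have "B \<subseteq> S" using p unfolding partition_on_def by auto
    then have "finite B" using fS finite_subset by blast
    moreover have "B \<noteq> {}" using p B unfolding partition_on_def by auto
    ultimately show "finite B \<and> B \<noteq> {}" by simp
  qed
  ultimately show "pl \<sigma>" using p unfolding pl_def partition_on_def by simp
qed

lemma Parts_union: "\<sigma> \<in> Parts S \<Longrightarrow> \<Union>\<sigma> = S"
  unfolding Parts_def partition_on_def by simp

lemma Parts_ne: "\<sigma> \<in> Parts S \<Longrightarrow> B \<in> \<sigma> \<Longrightarrow> B \<noteq> {}"
  unfolding Parts_def partition_on_def by auto

lemma Parts_disj: "\<sigma> \<in> Parts S \<Longrightarrow> B \<in> \<sigma> \<Longrightarrow> B' \<in> \<sigma> \<Longrightarrow> B \<noteq> B' \<Longrightarrow> B \<inter> B' = {}"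
  unfolding Parts_def partition_on_def by (auto dest: disjointD)

lemma po_refines: "po (Parts S) refines"
proof -
  have r: "\<forall>x\<in>Parts S. refines x x" unfolding refines_def by blast
  have t: "\<forall>x\<in>Parts S. \<forall>y\<in>Parts S. \<forall>z\<in>Parts S. refines x y \<longrightarrow> refines y z \<longrightarrow> refines x z"
    unfolding refines_def by (meson order_trans)
  have a: "\<forall>x\<in>Parts S. \<forall>y\<in>Parts S. refines x y \<longrightarrow> refines y x \<longrightarrow> x = y"
  proof (intro ballI impI)
    fix x y assume x: "x \<in> Parts S" and y: "y \<in> Parts S" and xy: "refines x y" and yx: "refines y x"
    have sub: "a \<subseteq> b" if a: "a \<in> Parts S" and b: "b \<in> Parts S" and ab: "refines a b" and ba: "refines b a" for a b
    proof
      fix B assume B: "B \<in> a"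
      obtain C where C: "C \<in> b" "B \<subseteq> C" using ab B unfolding refines_def by blast
      obtain B' where B': "B' \<in> a" "C \<subseteq> B'" using ba C unfolding refines_def by blast
      have "B \<noteq> {}" using Parts_ne[OF a B] .
      then have "B = B'" using Parts_disj[OF a B B'(1)] C B' by blast
      then have "B = C" using C B' by blast
      then show "B \<in> b" using C by simp
    qed
    show "x = y" using sub[OF x y xy yx] sub[OF y x yx xy] by blast
  qed
  show ?thesis unfolding po_def using r t a by blast
qed


definition pre :: "(nat \<Rightarrow> nat) \<Rightarrow> nat set \<Rightarrow> nat set \<Rightarrow> nat set" where
  "pre e A B = {i\<in>A. e i \<in> B}"

lemma pre_img: "bij_betw e A S \<Longrightarrow> B \<subseteq> S \<Longrightarrow> e ` pre e A B = B"
  unfolding pre_def bij_betw_def by auto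

lemma img_pre: "bij_betw e A S \<Longrightarrow> I \<subseteq> A \<Longrightarrow> pre e A (e ` I) = I"
  unfolding pre_def bij_betw_def inj_on_def by auto

lemma part_pre:
  assumes b: "bij_betw e A S" and p: "partition_on S \<rho>"
  shows "partition_on A (pre e A ` \<rho>)"
proof (rule partition_onI)
  have u: "\<Union>\<rho> = S" using p unfolding partition_on_def by simp
  have "\<Union> (pre e A ` \<rho>) = pre e A (\<Union>\<rho>)" unfolding pre_def by auto
  also have "\<dots> = A" using u b unfolding pre_def bij_betw_def by auto
  finally show "\<Union> (pre e A ` \<rho>) = A" .
next
  fix p q assume "p \<in> pre e A ` \<rho>" "q \<in> pre e A ` \<rho>" "p \<noteq> q"
  then obtain B C where "B \<in> \<rho>" "C \<in> \<rho>" "p = pre e A B" "q = pre e A C" "B \<noteq> C" by auto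
  then have "B \<inter> C = {}" using p unfolding partition_on_def by (auto dest: disjointD)
  then show "disjnt p q" using \<open>p = pre e A B\<close> \<open>q = pre e A C\<close> unfolding pre_def disjnt_def by auto
next
  show "{} \<notin> pre e A ` \<rho>"
  proof
    assume "{} \<in> pre e A ` \<rho>"
    then obtain B where B: "B \<in> \<rho>" "pre e A B = {}" by auto
    have "B \<subseteq> S" "B \<noteq> {}" using B p unfolding partition_on_def by auto
    then show False using pre_img[OF b \<open>B \<subseteq> S\<close>] B by auto
  qed
qed

lemma part_img:
  assumes b: "bij_betw e A S" and p: "partition_on A \<tau>"
  shows "partition_on S ((`) e ` \<tau>)"
proof -
  have "inj_on e A" using b unfolding bij_betw_def by simp
  from partition_on_inj_image[OF p this] have "partition_on (e ` A) ((`) e ` \<tau> - {{}})" .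
  moreover have "e ` A = S" using b unfolding bij_betw_def by simp
  moreover have "{} \<notin> (`) e ` \<tau>" using p unfolding partition_on_def by auto
  ultimately show ?thesis by simp
qed

lemma pre_img_part: "bij_betw e A S \<Longrightarrow> partition_on A \<tau> \<Longrightarrow> pre e A ` ((`) e ` \<tau>) = \<tau>"
proof -
  assume b: "bij_betw e A S" and p: "partition_on A \<tau>"
  have "\<forall>I\<in>\<tau>. I \<subseteq> A" using p unfolding partition_on_def by auto
  then show ?thesis using img_pre[OF b] by (simp add: image_image)
qed

lemma img_pre_part: "bij_betw e A S \<Longrightarrow> partition_on S \<rho> \<Longrightarrow> (`) e ` (pre e A ` \<rho>) = \<rho>"
proof -
  assume b: "bij_betw e A S" and p: "partition_on S \<rho>"
  have "\<forall>B\<in>\<rho>. B \<subseteq> S" using p unfolding partition_on_def by auto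
  then show ?thesis using pre_img[OF b] by (simp add: image_image)
qed

lemma pre_bij: "bij_betw e A S \<Longrightarrow> bij_betw ((`) (pre e A)) (Parts S) (Parts A)"
proof -
  assume b: "bij_betw e A S"
  show ?thesis
  proof (rule bij_betw_byWitness[where f'="(`) ((`) e)"])
    show "\<forall>a\<in>Parts S. (`) ((`) e) (pre e A ` a) = a" using img_pre_part[OF b] unfolding Parts_def by simp
    show "\<forall>a'\<in>Parts A. pre e A ` (`) ((`) e) a' = a'" using pre_img_part[OF b] unfolding Parts_def by simp
    show "(`) (pre e A) ` Parts S \<subseteq> Parts A" using part_pre[OF b] unfolding Parts_def by auto
    show "(`) ((`) e) ` Parts A \<subseteq> Parts S" using part_img[OF b] unfolding Parts_def by auto
  qed
qed

lemma pre_refines: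
  assumes b: "bij_betw e A S" and p1: "\<rho>1 \<in> Parts S" and p2: "\<rho>2 \<in> Parts S"
  shows "refines \<rho>1 \<rho>2 \<longleftrightarrow> refines (pre e A ` \<rho>1) (pre e A ` \<rho>2)"
proof
  assume r: "refines \<rho>1 \<rho>2"
  show "refines (pre e A ` \<rho>1) (pre e A ` \<rho>2)" unfolding refines_def
  proof
    fix X assume "X \<in> pre e A ` \<rho>1"
    then obtain B where B: "B \<in> \<rho>1" "X = pre e A B" by auto
    then obtain C where C: "C \<in> \<rho>2" "B \<subseteq> C" using r unfolding refines_def by blast
    have "pre e A B \<subseteq> pre e A C" using C(2) unfolding pre_def by auto
    then show "\<exists>Y\<in>pre e A ` \<rho>2. X \<subseteq> Y" using B C by blast
  qed
next
  assume r: "refines (pre e A ` \<rho>1) (pre e A ` \<rho>2)"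
  show "refines \<rho>1 \<rho>2" unfolding refines_def
  proof
    fix B assume B: "B \<in> \<rho>1"
    then obtain C where C: "C \<in> \<rho>2" "pre e A B \<subseteq> pre e A C" using r unfolding refines_def by blast
    have "B \<subseteq> S" "C \<subseteq> S" using B C p1 p2 unfolding Parts_def partition_on_def by auto
    have "e ` pre e A B \<subseteq> e ` pre e A C" using C(2) by (rule image_mono)
    then have "B \<subseteq> C" using pre_img[OF b \<open>B \<subseteq> S\<close>] pre_img[OF b \<open>C \<subseteq> S\<close>] by simp
    then show "\<exists>C\<in>\<rho>2. B \<subseteq> C" using C by blast
  qed
qed


context pyr begin

definition KK :: "nat set \<Rightarrow> nat set set \<Rightarrow> (nat \<Rightarrow> 'a) \<Rightarrow> complex" where
  "KK S \<pi> X = (\<Sum>\<sigma>\<in>{\<sigma>\<in>Parts S. refines \<sigma> \<pi>}. Phi \<sigma> X * of_int (mobius (Parts S) refines \<sigma> \<pi>))"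

lemma K_part_KK:
  assumes "\<pi> \<in> set_partitions (length Xs)"
  shows "K_part phiU iota \<pi> Xs = KK {0..<length Xs} \<pi> (nth Xs)"
  unfolding K_part_def KK_def mu_Pi_def set_partitions_Parts
proof (rule sum.cong[OF refl])
  fix \<sigma> assume "\<sigma> \<in> {\<sigma> \<in> Parts {0..<length Xs}. refines \<sigma> \<pi>}"
  then have "\<sigma> \<in> set_partitions (length Xs)" unfolding set_partitions_Parts by simp
  then show "phi_part phiU iota \<sigma> Xs * of_int (mobius (Parts {0..<length Xs}) refines \<sigma> \<pi>) =
         Phi \<sigma> (nth Xs) * of_int (mobius (Parts {0..<length Xs}) refines \<sigma> \<pi>)"
    using phi_part_Phi by simp
qed

lemma pl_Parts: "pl c \<Longrightarrow> c \<in> Parts (\<Union>c)"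
  unfolding pl_def Parts_def partition_on_def by auto

lemma K_sub_KK:
  assumes pl: "pl c"
  shows "K_sub phiU iota c Xs = KK (\<Union>c) c (nth Xs)"
proof -
  define S where "S = \<Union>c"
  define s where "s = sorted_list_of_set S"
  define m where "m = length s"
  have fS: "finite S" using pl unfolding pl_def S_def by auto
  have b: "bij_betw (nth s) {..<m} S"
    by (rule bij_betw_nth) (use fS in \<open>auto simp: s_def m_def\<close>)
  define A where "A = {..<m}"
  have A0: "{0..<m} = A" unfolding A_def by auto
  have cS: "c \<in> Parts S" using pl_Parts[OF pl] unfolding S_def .
  have tp: "transport_part \<rho> = pre (nth s) A ` \<rho>" if "\<rho> \<in> Parts S" for \<rho>
    using Parts_union[OF that] unfolding transport_part_def Let_def pre_def A_def m_def s_def by auto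
  have sub: "sub_list \<rho> Xs = sub_list c Xs" if "\<rho> \<in> Parts S" for \<rho>
    using Parts_union[OF that] unfolding sub_list_def S_def by simp
  have len: "length (sub_list c Xs) = m" unfolding sub_list_def m_def s_def S_def by simp
  have bb: "bij_betw ((`) (pre (nth s) A)) (Parts S) (Parts A)" using pre_bij[OF b] unfolding A_def .
  have ord: "\<forall>x\<in>Parts S. \<forall>y\<in>Parts S. refines x y \<longleftrightarrow> refines (pre (nth s) A ` x) (pre (nth s) A ` y)"
    using pre_refines[OF b] unfolding A_def by blast
  have img: "{\<sigma> \<in> Parts A. refines \<sigma> (pre (nth s) A ` c)} = (`) (pre (nth s) A) ` {\<rho>\<in>Parts S. refines \<rho> c}"
  proof
    show "{\<sigma> \<in> Parts A. refines \<sigma> (pre (nth s) A ` c)} \<subseteq> (`) (pre (nth s) A) ` {\<rho>\<in>Parts S. refines \<rho> c}"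
    proof
      fix \<sigma> assume \<sigma>: "\<sigma> \<in> {\<sigma> \<in> Parts A. refines \<sigma> (pre (nth s) A ` c)}"
      have "\<sigma> \<in> (`) (pre (nth s) A) ` Parts S" using bb \<sigma> unfolding bij_betw_def by auto
      then obtain \<rho> where \<rho>: "\<rho> \<in> Parts S" "\<sigma> = pre (nth s) A ` \<rho>" by auto
      then have "refines \<rho> c" using ord cS \<sigma> by auto
      then show "\<sigma> \<in> (`) (pre (nth s) A) ` {\<rho>\<in>Parts S. refines \<rho> c}" using \<rho> by auto
    qed
  next
    show "(`) (pre (nth s) A) ` {\<rho>\<in>Parts S. refines \<rho> c} \<subseteq> {\<sigma> \<in> Parts A. refines \<sigma> (pre (nth s) A ` c)}"
      using ord cS bb unfolding bij_betw_def by auto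
  qed
  have inj: "inj_on ((`) (pre (nth s) A)) {\<rho>\<in>Parts S. refines \<rho> c}"
    using bb unfolding bij_betw_def by (auto intro: inj_on_subset)
  have "K_sub phiU iota c Xs = K_part phiU iota (pre (nth s) A ` c) (sub_list c Xs)"
    unfolding K_sub_def using tp[OF cS] by simp
  also have "\<dots> = (\<Sum>\<sigma>\<in>{\<sigma> \<in> Parts A. refines \<sigma> (pre (nth s) A ` c)}.
      phi_part phiU iota \<sigma> (sub_list c Xs) * of_int (mobius (Parts A) refines \<sigma> (pre (nth s) A ` c)))"
    unfolding K_part_def len mu_Pi_def set_partitions_Parts A0 ..
  also have "\<dots> = (\<Sum>\<rho>\<in>{\<rho>\<in>Parts S. refines \<rho> c}.
      phi_part phiU iota (pre (nth s) A ` \<rho>) (sub_list c Xs) * of_int (mobius (Parts A) refines (pre (nth s) A ` \<rho>) (pre (nth s) A ` c)))"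
    unfolding img by (rule sum.reindex[OF inj, unfolded comp_def])
  also have "\<dots> = (\<Sum>\<rho>\<in>{\<rho>\<in>Parts S. refines \<rho> c}. Phi \<rho> (nth Xs) * of_int (mobius (Parts S) refines \<rho> c))"
  proof (rule sum.cong[OF refl])
    fix \<rho> assume "\<rho> \<in> {\<rho>\<in>Parts S. refines \<rho> c}"
    then have \<rho>: "\<rho> \<in> Parts S" by simp
    have "phi_part phiU iota (pre (nth s) A ` \<rho>) (sub_list c Xs) = Phi \<rho> (nth Xs)"
      using phi_transport[OF Parts_pl[OF fS \<rho>], of Xs] tp[OF \<rho>] sub[OF \<rho>] by simp
    moreover have "mobius (Parts A) refines (pre (nth s) A ` \<rho>) (pre (nth s) A ` c) = mobius (Parts S) refines \<rho> c"
      using mob_iso[OF bb ord \<rho> cS] by simp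
    ultimately show "phi_part phiU iota (pre (nth s) A ` \<rho>) (sub_list c Xs) * of_int (mobius (Parts A) refines (pre (nth s) A ` \<rho>) (pre (nth s) A ` c))
        = Phi \<rho> (nth Xs) * of_int (mobius (Parts S) refines \<rho> c)" by simp
  qed
  finally show ?thesis unfolding KK_def S_def .
qed

end

definition res :: "nat set set \<Rightarrow> nat set set \<Rightarrow> nat set set" where
  "res d \<rho> = {B\<in>\<rho>. B \<subseteq> \<Union>d}"

locale cdec =
  fixes S :: "nat set" and \<pi> :: "nat set set"
  assumes finS: "finite S" and piP: "\<pi> \<in> Parts S"
begin

abbreviation "DD \<equiv> components \<pi>"

lemma pl_pi: "pl \<pi>" using Parts_pl[OF finS piP] .

lemma finD: "finite DD" using finite_components pl_pi unfolding pl_def by auto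

lemma comp_sub: "d \<in> DD \<Longrightarrow> d \<subseteq> \<pi>"
  unfolding components_cls using cls_sub by auto

lemma comp_cover: "B \<in> \<pi> \<Longrightarrow> \<exists>d\<in>DD. B \<in> d"
  unfolding components_cls using cls_self by blast

lemma comp_uniq: "d \<in> DD \<Longrightarrow> e \<in> DD \<Longrightarrow> B \<in> d \<Longrightarrow> B \<in> e \<Longrightarrow> d = e"
proof -
  assume "d \<in> DD" "e \<in> DD" "B \<in> d" "B \<in> e"
  then obtain B1 B2 where "d = cls \<pi> B1" "e = cls \<pi> B2" unfolding components_cls by auto
  then show "d = e" using cls_disj \<open>B \<in> d\<close> \<open>B \<in> e\<close> by metis
qed

lemma supp_uniq: "d \<in> DD \<Longrightarrow> e \<in> DD \<Longrightarrow> x \<in> \<Union>d \<Longrightarrow> x \<in> \<Union>e \<Longrightarrow> d = e"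
proof -
  assume d: "d \<in> DD" and e: "e \<in> DD" and x: "x \<in> \<Union>d" "x \<in> \<Union>e"
  obtain B where B: "B \<in> d" "x \<in> B" using x by auto
  obtain B' where B': "B' \<in> e" "x \<in> B'" using x by auto
  have "B \<in> \<pi>" "B' \<in> \<pi>" using B B' comp_sub d e by auto
  then have "B = B'" using Parts_disj[OF piP] B B' by blast
  then show "d = e" using comp_uniq d e B B' by blast
qed

lemma block_in_comp: "B \<in> \<pi> \<Longrightarrow> d \<in> DD \<Longrightarrow> B \<inter> \<Union>d \<noteq> {} \<Longrightarrow> B \<in> d"
proof -
  assume B: "B \<in> \<pi>" and d: "d \<in> DD" and i: "B \<inter> \<Union>d \<noteq> {}"
  obtain e where e: "e \<in> DD" "B \<in> e" using comp_cover[OF B] by blast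
  obtain x where "x \<in> B" "x \<in> \<Union>d" using i by auto
  then have "x \<in> \<Union>e" using e by auto
  then have "e = d" using supp_uniq[OF e(1) d] \<open>x \<in> \<Union>d\<close> by blast
  then show "B \<in> d" using e by simp
qed

lemma refines_comp:
  assumes \<rho>: "\<rho> \<in> Parts S" "refines \<rho> \<pi>" and B: "B \<in> \<rho>"
  shows "\<exists>d\<in>DD. B \<subseteq> \<Union>d"
proof -
  obtain C where C: "C \<in> \<pi>" "B \<subseteq> C" using \<rho>(2) B unfolding refines_def by blast
  obtain d where d: "d \<in> DD" "C \<in> d" using comp_cover[OF C(1)] by blast
  then show ?thesis using C by blast
qed

lemma sub_supp_uniq:
  assumes "d \<in> DD" "e \<in> DD" "B \<subseteq> \<Union>d" "B \<subseteq> \<Union>e" "B \<noteq> {}"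
  shows "d = e"
  using assms supp_uniq by blast

lemma res_Parts:
  assumes \<rho>: "\<rho> \<in> Parts S" "refines \<rho> \<pi>" and d: "d \<in> DD"
  shows "res d \<rho> \<in> Parts (\<Union>d)" "refines (res d \<rho>) d"
proof -
  have u: "\<Union>(res d \<rho>) = \<Union>d"
  proof
    show "\<Union>(res d \<rho>) \<subseteq> \<Union>d" unfolding res_def by auto
  next
    show "\<Union>d \<subseteq> \<Union>(res d \<rho>)"
    proof
      fix x assume x: "x \<in> \<Union>d"
      have "\<Union>d \<subseteq> S" using comp_sub[OF d] Parts_union[OF piP] by auto
      then have "x \<in> \<Union>\<rho>" using x Parts_union[OF \<rho>(1)] by auto
      then obtain B where B: "B \<in> \<rho>" "x \<in> B" by auto
      obtain e where e: "e \<in> DD" "B \<subseteq> \<Union>e" using refines_comp[OF \<rho> B(1)] by blast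
      then have "e = d" using supp_uniq[OF e(1) d] x B by blast
      then show "x \<in> \<Union>(res d \<rho>)" using B e unfolding res_def by auto
    qed
  qed
  have "partition_on (\<Union>d) (res d \<rho>)"
  proof (rule partition_onI)
    show "\<Union>(res d \<rho>) = \<Union>d" by (rule u)
    show "\<And>p q. p \<in> res d \<rho> \<Longrightarrow> q \<in> res d \<rho> \<Longrightarrow> p \<noteq> q \<Longrightarrow> disjnt p q"
      using Parts_disj[OF \<rho>(1)] unfolding res_def disjnt_def by auto
    show "{} \<notin> res d \<rho>" using Parts_ne[OF \<rho>(1)] unfolding res_def by auto
  qed
  then show "res d \<rho> \<in> Parts (\<Union>d)" unfolding Parts_def by simp
  show "refines (res d \<rho>) d" unfolding refines_def
  proof
    fix B assume B: "B \<in> res d \<rho>"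
    obtain C where C: "C \<in> \<pi>" "B \<subseteq> C" using \<rho>(2) B unfolding refines_def res_def by blast
    have "B \<noteq> {}" using Parts_ne[OF \<rho>(1)] B unfolding res_def by auto
    then have "C \<inter> \<Union>d \<noteq> {}" using B C unfolding res_def by auto
    then have "C \<in> d" using block_in_comp[OF C(1) d] by blast
    then show "\<exists>C\<in>d. B \<subseteq> C" using C by blast
  qed
qed

lemma res_union:
  assumes \<rho>: "\<rho> \<in> Parts S" "refines \<rho> \<pi>"
  shows "(\<Union>d\<in>DD. res d \<rho>) = \<rho>"
proof
  show "(\<Union>d\<in>DD. res d \<rho>) \<subseteq> \<rho>" unfolding res_def by auto
  show "\<rho> \<subseteq> (\<Union>d\<in>DD. res d \<rho>)"
  proof
    fix B assume B: "B \<in> \<rho>"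
    obtain d where "d \<in> DD" "B \<subseteq> \<Union>d" using refines_comp[OF \<rho> B] by blast
    then show "B \<in> (\<Union>d\<in>DD. res d \<rho>)" using B unfolding res_def by auto
  qed
qed

lemma res_pi: "d \<in> DD \<Longrightarrow> res d \<pi> = d"
proof
  assume d: "d \<in> DD"
  show "res d \<pi> \<subseteq> d"
  proof
    fix B assume B: "B \<in> res d \<pi>"
    then have "B \<in> \<pi>" "B \<subseteq> \<Union>d" "B \<noteq> {}" using Parts_ne[OF piP] unfolding res_def by auto
    then show "B \<in> d" using block_in_comp[OF _ d] by blast
  qed
  show "d \<subseteq> res d \<pi>" using comp_sub[OF d] unfolding res_def by auto
qed

lemma refines_res:
  assumes r1: "\<rho>1 \<in> Parts S" "refines \<rho>1 \<pi>" and r2: "\<rho>2 \<in> Parts S" "refines \<rho>2 \<pi>"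
  shows "refines \<rho>1 \<rho>2 \<longleftrightarrow> (\<forall>d\<in>DD. refines (res d \<rho>1) (res d \<rho>2))"
proof
  assume r: "refines \<rho>1 \<rho>2"
  show "\<forall>d\<in>DD. refines (res d \<rho>1) (res d \<rho>2)"
  proof (intro ballI)
    fix d assume d: "d \<in> DD"
    show "refines (res d \<rho>1) (res d \<rho>2)" unfolding refines_def
    proof
      fix B assume B: "B \<in> res d \<rho>1"
      obtain C where C: "C \<in> \<rho>2" "B \<subseteq> C" using r B unfolding refines_def res_def by blast
      obtain e where e: "e \<in> DD" "C \<subseteq> \<Union>e" using refines_comp[OF r2 C(1)] by blast
      have "B \<noteq> {}" using Parts_ne[OF r1(1)] B unfolding res_def by auto
      then have "e = d" using sub_supp_uniq[OF e(1) d] e C B unfolding res_def by blast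
      then show "\<exists>C\<in>res d \<rho>2. B \<subseteq> C" using C e unfolding res_def by auto
    qed
  qed
next
  assume r: "\<forall>d\<in>DD. refines (res d \<rho>1) (res d \<rho>2)"
  show "refines \<rho>1 \<rho>2" unfolding refines_def
  proof
    fix B assume B: "B \<in> \<rho>1"
    obtain d where d: "d \<in> DD" "B \<subseteq> \<Union>d" using refines_comp[OF r1 B] by blast
    then have "B \<in> res d \<rho>1" using B unfolding res_def by auto
    then obtain C where "C \<in> res d \<rho>2" "B \<subseteq> C" using r d unfolding refines_def by blast
    then show "\<exists>C\<in>\<rho>2. B \<subseteq> C" unfolding res_def by auto
  qed
qed

lemma union_DD: "\<Union>DD = \<pi>"
  using comp_sub comp_cover by blast

lemma U_props:
  assumes f: "f \<in> PiE DD (\<lambda>d. {\<tau>\<in>Parts (\<Union>d). refines \<tau> d \<and> P d \<tau>})"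
  shows "\<Union>(f ` DD) \<in> Parts S" "refines (\<Union>(f ` DD)) \<pi>" "\<And>d. d \<in> DD \<Longrightarrow> res d (\<Union>(f ` DD)) = f d"
proof -
  have fd: "f d \<in> Parts (\<Union>d)" "refines (f d) d" if "d \<in> DD" for d using f that by auto
  have blk: "B \<subseteq> \<Union>d" "B \<noteq> {}" if "d \<in> DD" "B \<in> f d" for d B
    using Parts_union[OF fd(1)[OF that(1)]] Parts_ne[OF fd(1)[OF that(1)] that(2)] that(2) by auto
  have "partition_on S (\<Union>(f ` DD))"
  proof (rule partition_onI)
    have "\<Union>(\<Union>(f ` DD)) = (\<Union>d\<in>DD. \<Union>(f d))" by auto
    also have "\<dots> = (\<Union>d\<in>DD. \<Union>d)" using Parts_union[OF fd(1)] by auto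
    also have "\<dots> = \<Union>\<pi>" using union_DD by auto
    also have "\<dots> = S" using Parts_union[OF piP] .
    finally show "\<Union>(\<Union>(f ` DD)) = S" .
  next
    fix p q assume p: "p \<in> \<Union>(f ` DD)" and q: "q \<in> \<Union>(f ` DD)" and pq: "p \<noteq> q"
    obtain d where d: "d \<in> DD" "p \<in> f d" using p by auto
    obtain e where e: "e \<in> DD" "q \<in> f e" using q by auto
    show "disjnt p q"
    proof (cases "d = e")
      case True
      then show ?thesis using Parts_disj[OF fd(1)[OF d(1)] d(2) _ pq] e unfolding disjnt_def by simp
    next
      case False
      have "p \<inter> q = {}"
      proof (rule ccontr)
        assume "p \<inter> q \<noteq> {}"
        then obtain x where "x \<in> p" "x \<in> q" by auto
        then have "x \<in> \<Union>d" "x \<in> \<Union>e" using blk(1)[OF d] blk(1)[OF e] by blast+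
        then show False using supp_uniq[OF d(1) e(1)] False by blast
      qed
      then show ?thesis unfolding disjnt_def .
    qed
  next
    show "{} \<notin> \<Union>(f ` DD)" using blk by blast
  qed
  then show "\<Union>(f ` DD) \<in> Parts S" unfolding Parts_def by simp
  show "refines (\<Union>(f ` DD)) \<pi>" unfolding refines_def
  proof
    fix B assume "B \<in> \<Union>(f ` DD)"
    then obtain d where d: "d \<in> DD" "B \<in> f d" by auto
    then obtain C where "C \<in> d" "B \<subseteq> C" using fd(2)[OF d(1)] unfolding refines_def by blast
    then show "\<exists>C\<in>\<pi>. B \<subseteq> C" using comp_sub[OF d(1)] by blast
  qed
  show "res d (\<Union>(f ` DD)) = f d" if d: "d \<in> DD" for d
  proof
    show "res d (\<Union>(f ` DD)) \<subseteq> f d"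
    proof
      fix B assume "B \<in> res d (\<Union>(f ` DD))"
      then obtain e where e: "e \<in> DD" "B \<in> f e" "B \<subseteq> \<Union>d" unfolding res_def by auto
      then have "e = d" using sub_supp_uniq[OF e(1) d _ e(3)] blk[OF e(1,2)] by blast
      then show "B \<in> f d" using e by simp
    qed
    show "f d \<subseteq> res d (\<Union>(f ` DD))" using blk[OF d] d unfolding res_def by auto
  qed
qed

lemma BJ:
  "bij_betw (\<lambda>f. \<Union>(f ` DD)) (PiE DD (\<lambda>d. {\<tau>\<in>Parts (\<Union>d). refines \<tau> d \<and> P d \<tau>}))
     {\<rho>\<in>Parts S. refines \<rho> \<pi> \<and> (\<forall>d\<in>DD. P d (res d \<rho>))}"
proof (rule bij_betw_byWitness[where f'="\<lambda>\<rho>. restrict (\<lambda>d. res d \<rho>) DD"])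
  show "\<forall>f\<in>PiE DD (\<lambda>d. {\<tau>\<in>Parts (\<Union>d). refines \<tau> d \<and> P d \<tau>}). restrict (\<lambda>d. res d (\<Union>(f ` DD))) DD = f"
  proof
    fix f assume f: "f \<in> PiE DD (\<lambda>d. {\<tau>\<in>Parts (\<Union>d). refines \<tau> d \<and> P d \<tau>})"
    have "restrict (\<lambda>d. res d (\<Union>(f ` DD))) DD = restrict f DD"
      using U_props(3)[OF f] by (auto intro: restrict_ext)
    also have "\<dots> = f" using f by (simp add: PiE_restrict)
    finally show "restrict (\<lambda>d. res d (\<Union>(f ` DD))) DD = f" .
  qed
  show "\<forall>\<rho>\<in>{\<rho>\<in>Parts S. refines \<rho> \<pi> \<and> (\<forall>d\<in>DD. P d (res d \<rho>))}. \<Union>(restrict (\<lambda>d. res d \<rho>) DD ` DD) = \<rho>"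
  proof
    fix \<rho> assume \<rho>: "\<rho> \<in> {\<rho>\<in>Parts S. refines \<rho> \<pi> \<and> (\<forall>d\<in>DD. P d (res d \<rho>))}"
    have "\<Union>(restrict (\<lambda>d. res d \<rho>) DD ` DD) = (\<Union>d\<in>DD. res d \<rho>)" by simp
    also have "\<dots> = \<rho>" using res_union \<rho> by blast
    finally show "\<Union>(restrict (\<lambda>d. res d \<rho>) DD ` DD) = \<rho>" .
  qed
  show "(\<lambda>f. \<Union>(f ` DD)) ` PiE DD (\<lambda>d. {\<tau>\<in>Parts (\<Union>d). refines \<tau> d \<and> P d \<tau>})
      \<subseteq> {\<rho>\<in>Parts S. refines \<rho> \<pi> \<and> (\<forall>d\<in>DD. P d (res d \<rho>))}"
  proof
    fix \<rho> assume "\<rho> \<in> (\<lambda>f. \<Union>(f ` DD)) ` PiE DD (\<lambda>d. {\<tau>\<in>Parts (\<Union>d). refines \<tau> d \<and> P d \<tau>})"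
    then obtain f where f: "f \<in> PiE DD (\<lambda>d. {\<tau>\<in>Parts (\<Union>d). refines \<tau> d \<and> P d \<tau>})" "\<rho> = \<Union>(f ` DD)" by auto
    have "\<forall>d\<in>DD. P d (res d \<rho>)" using U_props(3)[OF f(1)] f by auto
    then show "\<rho> \<in> {\<rho>\<in>Parts S. refines \<rho> \<pi> \<and> (\<forall>d\<in>DD. P d (res d \<rho>))}"
      using U_props(1,2)[OF f(1)] f(2) by simp
  qed
  show "(\<lambda>\<rho>. restrict (\<lambda>d. res d \<rho>) DD) ` {\<rho>\<in>Parts S. refines \<rho> \<pi> \<and> (\<forall>d\<in>DD. P d (res d \<rho>))}
      \<subseteq> PiE DD (\<lambda>d. {\<tau>\<in>Parts (\<Union>d). refines \<tau> d \<and> P d \<tau>})"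
  proof
    fix g assume "g \<in> (\<lambda>\<rho>. restrict (\<lambda>d. res d \<rho>) DD) ` {\<rho>\<in>Parts S. refines \<rho> \<pi> \<and> (\<forall>d\<in>DD. P d (res d \<rho>))}"
    then obtain \<rho> where \<rho>: "\<rho> \<in> Parts S" "refines \<rho> \<pi>" "\<forall>d\<in>DD. P d (res d \<rho>)"
      and g: "g = restrict (\<lambda>d. res d \<rho>) DD" by auto
    show "g \<in> PiE DD (\<lambda>d. {\<tau>\<in>Parts (\<Union>d). refines \<tau> d \<and> P d \<tau>})"
      unfolding g using res_Parts[OF \<rho>(1,2)] \<rho>(3) by auto
  qed
qed

end

lemma pl_Parts2: "pl c \<Longrightarrow> c \<in> Parts (\<Union>c)"
  unfolding pl_def Parts_def partition_on_def by auto

context cdec begin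

lemma MP:
  assumes \<sigma>: "\<sigma> \<in> Parts S" "refines \<sigma> \<pi>"
  shows "mobius (Parts S) refines \<sigma> \<pi> = (\<Prod>d\<in>DD. mobius (Parts (\<Union>d)) refines (res d \<sigma>) d)"
proof -
  define g where "g \<rho> = (\<Prod>d\<in>DD. mobius (Parts (\<Union>d)) refines (res d \<sigma>) (res d \<rho>))" for \<rho>
  have finP: "finite (Parts S)" using finite_Parts[OF finS] .
  have po: "po (Parts S) refines" by (rule po_refines)
  have finSd: "finite (\<Union>d)" if "d \<in> DD" for d
  proof -
    have "\<Union>d \<subseteq> S" using comp_sub[OF that] Parts_union[OF piP] by auto
    then show ?thesis using finS finite_subset by blast
  qed
  have H: "\<forall>\<rho>'\<in>Parts S. refines \<sigma> \<rho>' \<and> refines \<rho>' \<pi> \<longrightarrow>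
      (\<Sum>z\<in>iv (Parts S) refines \<sigma> \<rho>'. g z) = (if \<sigma> = \<rho>' then 1 else 0)"
  proof (intro ballI impI)
    fix \<rho>' assume \<rho>'P: "\<rho>' \<in> Parts S" and \<rho>'b: "refines \<sigma> \<rho>' \<and> refines \<rho>' \<pi>"
    define Pd where "Pd d \<tau> = (refines (res d \<sigma>) \<tau> \<and> refines \<tau> (res d \<rho>'))" for d \<tau>
    have ivs: "iv (Parts S) refines \<sigma> \<rho>' = {\<rho>\<in>Parts S. refines \<rho> \<pi> \<and> (\<forall>d\<in>DD. Pd d (res d \<rho>))}"
    proof
      show "iv (Parts S) refines \<sigma> \<rho>' \<subseteq> {\<rho>\<in>Parts S. refines \<rho> \<pi> \<and> (\<forall>d\<in>DD. Pd d (res d \<rho>))}"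
      proof
        fix \<rho> assume "\<rho> \<in> iv (Parts S) refines \<sigma> \<rho>'"
        then have \<rho>: "\<rho> \<in> Parts S" "refines \<sigma> \<rho>" "refines \<rho> \<rho>'" unfolding iv_def by auto
        have rp: "refines \<rho> \<pi>" using po_trans[OF po \<rho>(1) \<rho>'P piP \<rho>(3)] \<rho>'b by simp
        have "\<forall>d\<in>DD. refines (res d \<sigma>) (res d \<rho>)" using refines_res[OF \<sigma> \<rho>(1) rp] \<rho>(2) by simp
        moreover have "\<forall>d\<in>DD. refines (res d \<rho>) (res d \<rho>')" using refines_res[OF \<rho>(1) rp \<rho>'P] \<rho>(3) \<rho>'b by simp
        ultimately show "\<rho> \<in> {\<rho>\<in>Parts S. refines \<rho> \<pi> \<and> (\<forall>d\<in>DD. Pd d (res d \<rho>))}"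
          using \<rho>(1) rp unfolding Pd_def by simp
      qed
      show "{\<rho>\<in>Parts S. refines \<rho> \<pi> \<and> (\<forall>d\<in>DD. Pd d (res d \<rho>))} \<subseteq> iv (Parts S) refines \<sigma> \<rho>'"
      proof
        fix \<rho> assume "\<rho> \<in> {\<rho>\<in>Parts S. refines \<rho> \<pi> \<and> (\<forall>d\<in>DD. Pd d (res d \<rho>))}"
        then have \<rho>: "\<rho> \<in> Parts S" "refines \<rho> \<pi>" "\<forall>d\<in>DD. Pd d (res d \<rho>)" by auto
        have "refines \<sigma> \<rho>" using refines_res[OF \<sigma> \<rho>(1,2)] \<rho>(3) unfolding Pd_def by simp
        moreover have "refines \<rho> \<rho>'" using refines_res[OF \<rho>(1,2) \<rho>'P] \<rho>(3) \<rho>'b unfolding Pd_def by simp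
        ultimately show "\<rho> \<in> iv (Parts S) refines \<sigma> \<rho>'" using \<rho>(1) unfolding iv_def by simp
      qed
    qed
    define A where "A d = {\<tau>\<in>Parts (\<Union>d). refines \<tau> d \<and> Pd d \<tau>}" for d
    have bj: "bij_betw (\<lambda>f. \<Union>(f ` DD)) (PiE DD A) {\<rho>\<in>Parts S. refines \<rho> \<pi> \<and> (\<forall>d\<in>DD. Pd d (res d \<rho>))}"
      unfolding A_def by (rule BJ)
    have "(\<Sum>z\<in>iv (Parts S) refines \<sigma> \<rho>'. g z) = (\<Sum>f\<in>PiE DD A. g (\<Union>(f ` DD)))"
      unfolding ivs by (rule sum.reindex_bij_betw[OF bj, symmetric])
    also have "\<dots> = (\<Sum>f\<in>PiE DD A. \<Prod>d\<in>DD. mobius (Parts (\<Union>d)) refines (res d \<sigma>) (f d))"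
    proof (rule sum.cong[OF refl])
      fix f assume f: "f \<in> PiE DD A"
      show "g (\<Union>(f ` DD)) = (\<Prod>d\<in>DD. mobius (Parts (\<Union>d)) refines (res d \<sigma>) (f d))"
        unfolding g_def using U_props(3)[OF f[unfolded A_def]] by (auto intro!: prod.cong)
    qed
    also have "\<dots> = (\<Prod>d\<in>DD. \<Sum>\<tau>\<in>A d. mobius (Parts (\<Union>d)) refines (res d \<sigma>) \<tau>)"
      by (rule prod_sum_PiE[symmetric]) (use finD finite_Parts finSd in \<open>auto simp: A_def\<close>)
    also have "\<dots> = (\<Prod>d\<in>DD. (if res d \<sigma> = res d \<rho>' then 1 else 0))"
    proof (rule prod.cong[OF refl])
      fix d assume d: "d \<in> DD"
      have rs: "res d \<sigma> \<in> Parts (\<Union>d)" "refines (res d \<sigma>) d" using res_Parts[OF \<sigma> d] by auto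
      have rr: "res d \<rho>' \<in> Parts (\<Union>d)" "refines (res d \<rho>') d" using res_Parts[OF \<rho>'P _ d] \<rho>'b by auto
      have le: "refines (res d \<sigma>) (res d \<rho>')" using refines_res[OF \<sigma> \<rho>'P] \<rho>'b d by simp
      have pod: "po (Parts (\<Union>d)) refines" by (rule po_refines)
      have "A d = iv (Parts (\<Union>d)) refines (res d \<sigma>) (res d \<rho>')"
      proof
        show "A d \<subseteq> iv (Parts (\<Union>d)) refines (res d \<sigma>) (res d \<rho>')" unfolding A_def Pd_def iv_def by auto
        show "iv (Parts (\<Union>d)) refines (res d \<sigma>) (res d \<rho>') \<subseteq> A d"
        proof
          fix \<tau> assume "\<tau> \<in> iv (Parts (\<Union>d)) refines (res d \<sigma>) (res d \<rho>')"
          then have \<tau>: "\<tau> \<in> Parts (\<Union>d)" "refines (res d \<sigma>) \<tau>" "refines \<tau> (res d \<rho>')" unfolding iv_def by auto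
          have "d \<in> Parts (\<Union>d)" using pl_Parts2 pl_sub[OF pl_pi comp_sub[OF d]] by simp
          then have "refines \<tau> d" using po_trans[OF pod \<tau>(1) rr(1) _ \<tau>(3) rr(2)] by simp
          then show "\<tau> \<in> A d" using \<tau> unfolding A_def Pd_def by simp
        qed
      qed
      then show "(\<Sum>\<tau>\<in>A d. mobius (Parts (\<Union>d)) refines (res d \<sigma>) \<tau>) = (if res d \<sigma> = res d \<rho>' then 1 else 0)"
        using mob_sum[OF finite_Parts[OF finSd[OF d]] pod rs(1) rr(1) le] by simp
    qed
    also have "\<dots> = (if \<sigma> = \<rho>' then 1 else 0)"
    proof (cases "\<sigma> = \<rho>'")
      case True then show ?thesis by simp
    next
      case False
      have "\<exists>d\<in>DD. res d \<sigma> \<noteq> res d \<rho>'"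
      proof (rule ccontr)
        assume "\<not> (\<exists>d\<in>DD. res d \<sigma> \<noteq> res d \<rho>')"
        then have "(\<Union>d\<in>DD. res d \<sigma>) = (\<Union>d\<in>DD. res d \<rho>')" by auto
        then have "\<sigma> = \<rho>'" using res_union[OF \<sigma>] res_union[OF \<rho>'P] \<rho>'b by simp
        then show False using False by simp
      qed
      then obtain d where d: "d \<in> DD" "res d \<sigma> \<noteq> res d \<rho>'" by blast
      have "(\<Prod>d\<in>DD. (if res d \<sigma> = res d \<rho>' then 1 else 0)::int) = 0"
        using d finD by (auto simp: prod_zero_iff)
      then show ?thesis using False by simp
    qed
    finally show "(\<Sum>z\<in>iv (Parts S) refines \<sigma> \<rho>'. g z) = (if \<sigma> = \<rho>' then 1 else 0)" .
  qed
  have refl: "refines \<pi> \<pi>" unfolding refines_def by blast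
  have "g \<pi> = mobius (Parts S) refines \<sigma> \<pi>"
    using mob_unique[OF finP po \<sigma>(1) H piP \<sigma>(2) refl piP] .
  moreover have "g \<pi> = (\<Prod>d\<in>DD. mobius (Parts (\<Union>d)) refines (res d \<sigma>) d)"
    unfolding g_def using res_pi by simp
  ultimately show ?thesis by simp
qed

end


context pyr begin

lemma KK_prod:
  assumes cd: "cdec S \<pi>"
  shows "KK S \<pi> X = (\<Prod>d\<in>components \<pi>. KK (\<Union>d) d X)"
proof -
  interpret cdec S \<pi> by (rule cd)
  define A where "A d = {\<tau>\<in>Parts (\<Union>d). refines \<tau> d \<and> True}" for d
  have finSd: "finite (\<Union>d)" if "d \<in> DD" for d
  proof -
    have "\<Union>d \<subseteq> S" using comp_sub[OF that] Parts_union[OF piP] by auto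
    then show ?thesis using finS finite_subset by blast
  qed
  have bj: "bij_betw (\<lambda>f. \<Union>(f ` DD)) (PiE DD A) {\<rho>\<in>Parts S. refines \<rho> \<pi> \<and> (\<forall>d\<in>DD. True)}"
    unfolding A_def by (rule BJ)
  have "KK S \<pi> X = (\<Sum>f\<in>PiE DD A. Phi (\<Union>(f ` DD)) X * of_int (mobius (Parts S) refines (\<Union>(f ` DD)) \<pi>))"
    unfolding KK_def using sum.reindex_bij_betw[OF bj, symmetric] by simp
  also have "\<dots> = (\<Sum>f\<in>PiE DD A. \<Prod>d\<in>DD. Phi (f d) X * of_int (mobius (Parts (\<Union>d)) refines (f d) d))"
  proof (rule sum.cong[OF refl])
    fix f assume f: "f \<in> PiE DD A"
    have f': "f \<in> PiE DD (\<lambda>d. {\<tau>\<in>Parts (\<Union>d). refines \<tau> d \<and> True})" using f unfolding A_def .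
    note U = U_props[OF f']
    have fd: "f d \<in> Parts (\<Union>d)" "refines (f d) d" if "d \<in> DD" for d using f that unfolding A_def by auto
    have blk: "B \<subseteq> \<Union>d" "B \<noteq> {}" if "d \<in> DD" "B \<in> f d" for d B
      using Parts_union[OF fd(1)[OF that(1)]] Parts_ne[OF fd(1)[OF that(1)] that(2)] that(2) by auto
    have ph: "Phi (\<Union>(f ` DD)) X = (\<Prod>d\<in>DD. Phi (f d) X)"
    proof (rule group)
      show "pl (\<Union>(f ` DD))" using Parts_pl[OF finS U(1)] .
      show "finite DD" by (rule finD)
      show "\<forall>a\<in>DD. f a \<subseteq> \<Union>(f ` DD)" by auto
      show "(\<Union>a\<in>DD. f a) = \<Union>(f ` DD)" by simp
      show "\<forall>a\<in>DD. \<forall>b\<in>DD. a \<noteq> b \<longrightarrow> f a \<inter> f b = {}"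
      proof (intro ballI impI)
        fix a b assume a: "a \<in> DD" and b: "b \<in> DD" and ab: "a \<noteq> b"
        show "f a \<inter> f b = {}"
        proof (rule ccontr)
          assume "f a \<inter> f b \<noteq> {}"
          then obtain B where B: "B \<in> f a" "B \<in> f b" by auto
          then show False using sub_supp_uniq[OF a b blk(1)[OF a B(1)] blk(1)[OF b B(2)] blk(2)[OF a B(1)]] ab by simp
        qed
      qed
      show "\<forall>a\<in>DD. \<forall>b\<in>DD. a \<noteq> b \<longrightarrow> (\<forall>B\<in>f a. \<forall>B'\<in>f b. \<not> crosses B B')"
      proof (intro ballI impI)
        fix a b B B' assume a: "a \<in> DD" and b: "b \<in> DD" and ab: "a \<noteq> b" and B: "B \<in> f a" and B': "B' \<in> f b"
        obtain C where C: "C \<in> a" "B \<subseteq> C" using fd(2)[OF a] B unfolding refines_def by blast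
        obtain C' where C': "C' \<in> b" "B' \<subseteq> C'" using fd(2)[OF b] B' unfolding refines_def by blast
        have CC: "C \<noteq> C'" using comp_uniq[OF a b] C C' ab by blast
        show "\<not> crosses B B'"
        proof
          assume "crosses B B'"
          then have cr: "crosses C C'" using cross_mono C(2) C'(2) CC by blast
          obtain B0 where B0: "a = cls \<pi> B0" using a components_cls by auto
          have "C' \<in> \<pi>" using comp_sub[OF b] C' by auto
          then have "C' \<in> a" using cls_closed[OF C(1)[unfolded B0] _ cr] B0 by simp
          then show False using comp_uniq[OF a b _ C'(1)] ab by simp
        qed
      qed
    qed
    have mu: "mobius (Parts S) refines (\<Union>(f ` DD)) \<pi> = (\<Prod>d\<in>DD. mobius (Parts (\<Union>d)) refines (f d) d)"
      using MP[OF U(1) U(2)] U(3) by simp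
    show "Phi (\<Union>(f ` DD)) X * of_int (mobius (Parts S) refines (\<Union>(f ` DD)) \<pi>) =
        (\<Prod>d\<in>DD. Phi (f d) X * of_int (mobius (Parts (\<Union>d)) refines (f d) d))"
      unfolding ph mu of_int_prod prod.distrib ..
  qed
  also have "\<dots> = (\<Prod>d\<in>DD. \<Sum>\<tau>\<in>A d. Phi \<tau> X * of_int (mobius (Parts (\<Union>d)) refines \<tau> d))"
    by (rule prod_sum_PiE[symmetric]) (use finD finite_Parts finSd in \<open>auto simp: A_def\<close>)
  also have "\<dots> = (\<Prod>d\<in>DD. KK (\<Union>d) d X)"
    unfolding KK_def A_def by simp
  finally show ?thesis .
qed

theorem part2:
  assumes "\<pi> \<in> set_partitions (length Xs)"
  shows "K_part phiU iota \<pi> Xs = (\<Prod>c\<in>components \<pi>. K_sub phiU iota c Xs)"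
proof -
  have cd: "cdec {0..<length Xs} \<pi>"
    by unfold_locales (use assms in \<open>auto simp: set_partitions_Parts\<close>)
  have pl: "pl \<pi>" using pl_partition[OF assms] .
  have "K_part phiU iota \<pi> Xs = KK {0..<length Xs} \<pi> (nth Xs)" using K_part_KK[OF assms] .
  also have "\<dots> = (\<Prod>d\<in>components \<pi>. KK (\<Union>d) d (nth Xs))" using KK_prod[OF cd] .
  also have "\<dots> = (\<Prod>c\<in>components \<pi>. K_sub phiU iota c Xs)"
  proof (rule prod.cong[OF refl])
    fix c assume "c \<in> components \<pi>"
    then have "c \<subseteq> \<pi>" using cls_sub components_cls by auto
    then show "KK (\<Union>c) c (nth Xs) = K_sub phiU iota c Xs" using K_sub_KK pl_sub[OF pl] by simp
  qed
  finally show ?thesis .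
qed

end

theorem proposition3p11:
  fixes scA :: "complex \<Rightarrow> 'a::ring_1 \<Rightarrow> 'a" and phi :: "'a \<Rightarrow> complex"
    and scU :: "complex \<Rightarrow> 'u::ring_1 \<Rightarrow> 'u" and phiU :: "'u \<Rightarrow> complex"
    and iota :: "nat \<Rightarrow> 'a \<Rightarrow> 'u"
    and Xs :: "'a list" and \<pi> :: "nat set set"
  assumes "exchangeability_system scA phi scU phiU iota"
    and "pyramidal_independence scU phiU iota"
    and "\<pi> \<in> set_partitions (length Xs)"
  shows "phi_part phiU iota \<pi> Xs = (\<Prod>c\<in>components \<pi>. phi_sub phiU iota c Xs) \<and>
         K_part phiU iota \<pi> Xs = (\<Prod>c\<in>components \<pi>. K_sub phiU iota c Xs)"
proof -
  interpret pyr scA phi scU phiU iota using assms(1,2) by unfold_locales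
  show ?thesis using part1[OF assms(3)] part2[OF assms(3)] by simp
qed

end
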